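(* Let $G$ be a countable group with the Haagerup property, and suppose there is a Haagerup function $L$ on $G$ such that $G$ has subexponential H-growth with respect to $L$. Then $(G,\sigma)$ has the metric Fejér property for every normalized 2-cocycle $\sigma$ on $G$.
   Context: A Haagerup function on $G$ is a negative definite function $h:G\to[0,\infty)$ which is proper ($h^{-1}([0,t])$ finite for all $t\ge0$); negative definite means $e^{-th}$ is positive definite for all $t>0$. $G$ has the Haagerup property if there is a net of normalized positive definite functions in $c_0(G)$ converging pointwise to $1$ (for countable $G$, equivalently a Haagerup function exists). $\lambda$ is the left regular representation, $\mathcal{K}(G)$ the finitely supported functions, $\pi_\lambda(f)=\sum_g f(g)\lambda(g)$; Haagerup content of finite nonempty $E$: $c(E)=\sup\{\|\pi_\lambda(f)\|\mid\mathrm{supp}f\subseteq E,\ \|f\|_2=1\}$; $G$ has subexponential H-growth w.r.t. $L$ if for every $b>1$ there is $r_0$ with $c(\{g\mid L(g)\le r\})<b^r$ for all $r\ge r_0$. $\sigma:G\times G\to\mathbb{T}$ is a normalized 2-cocycle ($\sigma(g,h)\sigma(gh,k)=\sigma(h,k)\sigma(g,hk)$, $\sigma(g,e)=\sigma(e,g)=1$); $\Lambda_\sigma(g)$ is the unitary on $\ell^2(G)$ with $(\Lambda_\sigma(g)\xi)(h)=\sigma(g,g^{-1}h)\xi(g^{-1}h)$; $C^*_r(G,\sigma)$ is the operator-norm closure of $\mathrm{span}\,\Lambda_\sigma(G)$. For $\varphi:G\to\mathbb{C}$, $M_\varphi$ is the linear map with $M_\varphi(\Lambda_\sigma(g))=\varphi(g)\Lambda_\sigma(g)$.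 $(G,\sigma)$ has the metric Fejér property if there is a net $\{\varphi_\beta\}$ in $\mathcal{K}(G)$ converging pointwise to $1$ with $\|M_{\varphi_\beta}\|=1$ (operator norm on $C^*_r(G,\sigma)$) for all $\beta$. *)

theory Defs
  imports "HOL-Analysis.Analysis"
begin

text \<open>Groups are written additively via the type class group_add (not assumed
commutative): the group law is +, the inverse is unary minus, the identity is 0.\<close>

definition pos_def_fun :: "('g::group_add \<Rightarrow> complex) \<Rightarrow> bool" where
  "pos_def_fun \<phi> \<longleftrightarrow>
     (\<forall>F c. finite F \<longrightarrow>
        (let s = (\<Sum>x\<in>F. \<Sum>y\<in>F. cnj (c x) * c y * \<phi> (- x + y)) in Im s = 0 \<and> Re s \<ge> 0))"

definition neg_def_fun :: "('g::group_add \<Rightarrow> real) \<Rightarrow> bool" where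
  "neg_def_fun h \<longleftrightarrow> (\<forall>g. h g \<ge> 0) \<and>
     (\<forall>t>0. pos_def_fun (\<lambda>g. complex_of_real (exp (- t * h g))))"

definition haagerup_function :: "('g::group_add \<Rightarrow> real) \<Rightarrow> bool" where
  "haagerup_function h \<longleftrightarrow> neg_def_fun h \<and> (\<forall>t\<ge>0. finite {g. h g \<le> t})"

definition vanishes_at_infinity :: "('g \<Rightarrow> complex) \<Rightarrow> bool" where
  "vanishes_at_infinity \<phi> \<longleftrightarrow> (\<forall>\<epsilon>>0. finite {g. cmod (\<phi> g) \<ge> \<epsilon>})"

text \<open>Existence of a net of normalized positive definite c_0 functions converging
pointwise to 1, expressed via the equivalent finite-set/epsilon formulation.\<close>
definition haagerup_property :: "'g::group_add itself \<Rightarrow> bool" where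
  "haagerup_property _ \<longleftrightarrow>
     (\<forall>F::'g set. \<forall>\<epsilon>>0. finite F \<longrightarrow>
        (\<exists>\<phi>. pos_def_fun \<phi> \<and> \<phi> 0 = 1 \<and> vanishes_at_infinity \<phi> \<and>
             (\<forall>g\<in>F. cmod (\<phi> g - 1) < \<epsilon>)))"

definition in_ell2 :: "('g \<Rightarrow> complex) \<Rightarrow> bool" where
  "in_ell2 \<xi> \<longleftrightarrow> (\<lambda>h. (cmod (\<xi> h))\<^sup>2) summable_on UNIV"

definition l2norm :: "('g \<Rightarrow> complex) \<Rightarrow> real" where
  "l2norm \<xi> = sqrt (infsum (\<lambda>h. (cmod (\<xi> h))\<^sup>2) UNIV)"

definition op_norm :: "(('g \<Rightarrow> complex) \<Rightarrow> ('g \<Rightarrow> complex)) \<Rightarrow> real" where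
  "op_norm T = Sup {l2norm (T \<xi>) | \<xi>. in_ell2 \<xi> \<and> l2norm \<xi> \<le> 1}"

definition fin_supp :: "('g \<Rightarrow> complex) \<Rightarrow> bool" where
  "fin_supp f \<longleftrightarrow> finite {g. f g \<noteq> 0}"

definition Lambda_tw :: "('g::group_add \<Rightarrow> 'g \<Rightarrow> complex) \<Rightarrow> 'g \<Rightarrow> ('g \<Rightarrow> complex) \<Rightarrow> ('g \<Rightarrow> complex)" where
  "Lambda_tw \<sigma> g \<xi> = (\<lambda>h. \<sigma> g (- g + h) * \<xi> (- g + h))"

definition pi_tw :: "('g::group_add \<Rightarrow> 'g \<Rightarrow> complex) \<Rightarrow> ('g \<Rightarrow> complex) \<Rightarrow> ('g \<Rightarrow> complex) \<Rightarrow> ('g \<Rightarrow> complex)" where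
  "pi_tw \<sigma> f \<xi> = (\<lambda>h. \<Sum>g\<in>{g. f g \<noteq> 0}. f g * Lambda_tw \<sigma> g \<xi> h)"

definition pi_lambda :: "('g::group_add \<Rightarrow> complex) \<Rightarrow> ('g \<Rightarrow> complex) \<Rightarrow> ('g \<Rightarrow> complex)" where
  "pi_lambda f = pi_tw (\<lambda>_ _. 1) f"

definition haagerup_content :: "'g::group_add set \<Rightarrow> real" where
  "haagerup_content E = Sup {op_norm (pi_lambda f) | f. {g. f g \<noteq> 0} \<subseteq> E \<and> l2norm f = 1}"

definition subexp_H_growth :: "('g::group_add \<Rightarrow> real) \<Rightarrow> bool" where
  "subexp_H_growth L \<longleftrightarrow>
     (\<forall>b::real>1. \<exists>r0. \<forall>r\<ge>r0. haagerup_content {g. L g \<le> r} < b powr r)"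

definition normalized_2cocycle :: "('g::group_add \<Rightarrow> 'g \<Rightarrow> complex) \<Rightarrow> bool" where
  "normalized_2cocycle \<sigma> \<longleftrightarrow>
     (\<forall>g h. cmod (\<sigma> g h) = 1) \<and>
     (\<forall>g h k. \<sigma> g h * \<sigma> (g + h) k = \<sigma> h k * \<sigma> g (h + k)) \<and>
     (\<forall>g. \<sigma> g 0 = 1 \<and> \<sigma> 0 g = 1)"

text \<open>Operator norm of the multiplier M_phi on C*_r(G,sigma). Elements of the dense
subspace span Lambda_sigma(G) are exactly pi_tw sigma c with c finitely supported
(coefficients are unique), and M_phi(pi_tw sigma c) = pi_tw sigma (phi * c).  The norm of
M_phi on C*_r(G,sigma) is the norm of its restriction to this dense subspace.\<close>
definition multiplier_norm :: "('g::group_add \<Rightarrow> 'g \<Rightarrow> complex) \<Rightarrow> ('g \<Rightarrow> complex) \<Rightarrow> real" where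
  "multiplier_norm \<sigma> \<phi> =
     Sup {op_norm (pi_tw \<sigma> (\<lambda>g. \<phi> g * c g)) | c. fin_supp c \<and> op_norm (pi_tw \<sigma> c) \<le> 1}"

text \<open>Existence of a net in K(G) converging pointwise to 1 with multiplier norm 1,
via the equivalent finite-set/epsilon formulation.\<close>
definition metric_fejer :: "('g::group_add \<Rightarrow> 'g \<Rightarrow> complex) \<Rightarrow> bool" where
  "metric_fejer \<sigma> \<longleftrightarrow>
     (\<forall>F::'g set. \<forall>\<epsilon>>0. finite F \<longrightarrow>
        (\<exists>\<phi>. fin_supp \<phi> \<and> multiplier_norm \<sigma> \<phi> = 1 \<and> (\<forall>g\<in>F. cmod (\<phi> g - 1) < \<epsilon>)))"

end

theory Submission
  imports Defs
begin
lemma l2norm_fin: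
  assumes "finite S" "\<And>g. g \<notin> S \<Longrightarrow> f g = 0"
  shows "l2norm f = L2_set (\<lambda>g. cmod (f g)) S"
proof -
  have "infsum (\<lambda>h. (cmod (f h))\<^sup>2) UNIV = infsum (\<lambda>h. (cmod (f h))\<^sup>2) S"
    by (rule infsum_cong_neutral) (use assms in auto)
  then show ?thesis using assms(1) unfolding l2norm_def L2_set_def by simp
qed

lemma in_ell2_fin:
  assumes "fin_supp f"
  shows "in_ell2 f"
proof -
  have "(\<lambda>h. (cmod (f h))\<^sup>2) summable_on UNIV \<longleftrightarrow> (\<lambda>h. (cmod (f h))\<^sup>2) summable_on {g. f g \<noteq> 0}"
    by (rule summable_on_cong_neutral) auto
  then show ?thesis using assms unfolding in_ell2_def fin_supp_def by simp
qed

lemma l2norm_supp: "fin_supp f \<Longrightarrow> l2norm f = L2_set (\<lambda>g. cmod (f g)) {g. f g \<noteq> 0}"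
  unfolding fin_supp_def by (rule l2norm_fin) auto

lemma l2norm_nonneg: "l2norm f \<ge> 0"
  unfolding l2norm_def by (simp add: infsum_nonneg)

lemma fin_supp_mono: "fin_supp g \<Longrightarrow> (\<And>h. f h \<noteq> 0 \<Longrightarrow> g h \<noteq> 0) \<Longrightarrow> fin_supp f"
  unfolding fin_supp_def by (metis (mono_tags, lifting) mem_Collect_eq rev_finite_subset subsetI)

lemma fin_supp_add: "fin_supp f \<Longrightarrow> fin_supp g \<Longrightarrow> fin_supp (\<lambda>h. f h + g h)"
  unfolding fin_supp_def
  by (rule finite_subset[of _ "{g. f g \<noteq> 0} \<union> {h. g h \<noteq> 0}"]) auto

lemma fin_supp_diff: "fin_supp f \<Longrightarrow> fin_supp g \<Longrightarrow> fin_supp (\<lambda>h. f h - g h)"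
  unfolding fin_supp_def
  by (rule finite_subset[of _ "{g. f g \<noteq> 0} \<union> {h. g h \<noteq> 0}"]) auto

lemma fin_supp_mult: "fin_supp f \<Longrightarrow> fin_supp (\<lambda>h. a h * f h)"
  unfolding fin_supp_def
  by (rule finite_subset[of _ "{g. f g \<noteq> 0}"]) auto

lemma fin_supp_mult2: "fin_supp f \<Longrightarrow> fin_supp (\<lambda>h. f h * a h)"
  unfolding fin_supp_def
  by (rule finite_subset[of _ "{g. f g \<noteq> 0}"]) auto

lemma fin_supp_sum: "finite I \<Longrightarrow> (\<And>i. i \<in> I \<Longrightarrow> fin_supp (F i)) \<Longrightarrow> fin_supp (\<lambda>h. \<Sum>i\<in>I. F i h)"
proof (induction I rule: finite_induct)
  case empty
  then show ?case by (simp add: fin_supp_def)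
next
  case (insert x F)
  then show ?case by (simp add: fin_supp_add)
qed

lemma l2norm_mono:
  assumes "fin_supp g" "\<And>h. cmod (f h) \<le> cmod (g h)"
  shows "l2norm f \<le> l2norm g"
proof -
  let ?S = "{h. g h \<noteq> 0}"
  have fS: "finite ?S" using assms(1) by (simp add: fin_supp_def)
  have z: "\<And>h. h \<notin> ?S \<Longrightarrow> f h = 0" using assms(2) by (metis mem_Collect_eq norm_le_zero_iff norm_zero)
  have "l2norm f = L2_set (\<lambda>h. cmod (f h)) ?S" by (rule l2norm_fin[OF fS z])
  also have "\<dots> \<le> L2_set (\<lambda>h. cmod (g h)) ?S" by (rule L2_set_mono) (use assms in auto)
  also have "\<dots> = l2norm g" by (rule l2norm_fin[symmetric]) (use fS in auto)
  finally show ?thesis .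
qed

lemma l2norm_triangle:
  assumes "fin_supp f" "fin_supp g"
  shows "l2norm (\<lambda>h. f h + g h) \<le> l2norm f + l2norm g"
proof -
  let ?S = "{h. f h \<noteq> 0} \<union> {h. g h \<noteq> 0}"
  have fS: "finite ?S" using assms by (simp add: fin_supp_def)
  have "l2norm (\<lambda>h. f h + g h) = L2_set (\<lambda>h. cmod (f h + g h)) ?S" by (rule l2norm_fin[OF fS]) auto
  also have "\<dots> \<le> L2_set (\<lambda>h. cmod (f h) + cmod (g h)) ?S" by (rule L2_set_mono) (auto simp: norm_triangle_ineq)
  also have "\<dots> \<le> L2_set (\<lambda>h. cmod (f h)) ?S + L2_set (\<lambda>h. cmod (g h)) ?S" by (rule L2_set_triangle_ineq)
  also have "\<dots> = l2norm f + l2norm g"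
    using l2norm_fin[OF fS, of f] l2norm_fin[OF fS, of g] by auto
  finally show ?thesis .
qed

lemma l2norm_triangle_diff:
  assumes "fin_supp f" "fin_supp g"
  shows "l2norm (\<lambda>h. f h - g h) \<le> l2norm f + l2norm g"
proof -
  have "fin_supp (\<lambda>h. - g h)" using fin_supp_mult[OF assms(2), of "\<lambda>_. -1"] by simp
  moreover have "l2norm (\<lambda>h. - g h) = l2norm g" unfolding l2norm_def by simp
  ultimately show ?thesis using l2norm_triangle[OF assms(1), of "\<lambda>h. - g h"] by simp
qed

lemma l2norm_scale:
  assumes "fin_supp f"
  shows "l2norm (\<lambda>h. a * f h) = cmod a * l2norm f"
proof -
  let ?S = "{h. f h \<noteq> 0}"
  have fS: "finite ?S" using assms by (simp add: fin_supp_def)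
  have "l2norm (\<lambda>h. a * f h) = L2_set (\<lambda>h. cmod (a * f h)) ?S" by (rule l2norm_fin[OF fS]) auto
  also have "\<dots> = cmod a * L2_set (\<lambda>h. cmod (f h)) ?S"
    by (simp add: L2_set_right_distrib norm_mult)
  also have "\<dots> = cmod a * l2norm f" using l2norm_fin[OF fS, of f] by auto
  finally show ?thesis .
qed

lemma l2norm_sum:
  assumes "finite I" "\<And>i. i \<in> I \<Longrightarrow> fin_supp (F i)"
  shows "l2norm (\<lambda>h. \<Sum>i\<in>I. F i h) \<le> (\<Sum>i\<in>I. l2norm (F i))"
  using assms
proof (induction I rule: finite_induct)
  case empty
  then show ?case by (simp add: l2norm_def)
next
  case (insert x I)
  have "l2norm (\<lambda>h. \<Sum>i\<in>insert x I. F i h) = l2norm (\<lambda>h. F x h + (\<Sum>i\<in>I. F i h))"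
    using insert by simp
  also have "\<dots> \<le> l2norm (F x) + l2norm (\<lambda>h. \<Sum>i\<in>I. F i h)"
    by (rule l2norm_triangle) (use insert fin_supp_sum in auto)
  also have "\<dots> \<le> l2norm (F x) + (\<Sum>i\<in>I. l2norm (F i))" using insert by auto
  finally show ?case using insert by simp
qed

lemma point_le_l2norm:
  assumes "fin_supp f"
  shows "cmod (f g) \<le> l2norm f"
proof -
  let ?S = "insert g {h. f h \<noteq> 0}"
  have fS: "finite ?S" using assms by (simp add: fin_supp_def)
  have "cmod (f g) \<le> L2_set (\<lambda>h. cmod (f h)) ?S" by (rule member_le_L2_set[OF fS]) auto
  also have "\<dots> = l2norm f" by (rule l2norm_fin[symmetric, OF fS]) auto
  finally show ?thesis .
qed

lemma l2norm_zero_iff: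
  assumes "fin_supp f"
  shows "l2norm f = 0 \<longleftrightarrow> (\<forall>h. f h = 0)"
proof -
  let ?S = "{h. f h \<noteq> 0}"
  have fS: "finite ?S" using assms by (simp add: fin_supp_def)
  show ?thesis using l2norm_fin[OF fS, of f] L2_set_eq_0_iff[OF fS, of "\<lambda>h. cmod (f h)"] by auto
qed

lemma L2_set_swap:
  "L2_set (\<lambda>x. L2_set (f x) B) A = L2_set (\<lambda>y. L2_set (\<lambda>x. f x y) A) B"
  unfolding L2_set_def
  by (simp add: sum_nonneg sum.swap[of _ A B])

definition twist :: "('g::group_add \<Rightarrow> 'g \<Rightarrow> complex) \<Rightarrow> bool" where
  "twist \<sigma> \<longleftrightarrow> (\<forall>g h. cmod (\<sigma> g h) = 1) \<and> (\<forall>g. \<sigma> g 0 = 1) \<and> (\<forall>h. \<sigma> 0 h = 1)"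

definition delta0 :: "'g::group_add \<Rightarrow> complex" where
  "delta0 = (\<lambda>s. if s = 0 then 1 else 0)"

definition Bnd :: "('g::group_add \<Rightarrow> 'g \<Rightarrow> complex) \<Rightarrow> ('g \<Rightarrow> complex) \<Rightarrow> real \<Rightarrow> bool" where
  "Bnd \<sigma> d M \<longleftrightarrow> (\<forall>\<xi>. fin_supp \<xi> \<longrightarrow> l2norm (pi_tw \<sigma> d \<xi>) \<le> M * l2norm \<xi>)"

lemma pi_sum:
  assumes "finite T" "{g. d g \<noteq> 0} \<subseteq> T"
  shows "pi_tw \<sigma> d \<xi> h = (\<Sum>g\<in>T. d g * (\<sigma> g (-g+h) * \<xi> (-g+h)))"
  unfolding pi_tw_def Lambda_tw_def
  by (rule sum.mono_neutral_left) (use assms in auto)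

lemma pi_supp:
  assumes "fin_supp d" "pi_tw \<sigma> d \<xi> h \<noteq> 0"
  shows "\<exists>g s. d g \<noteq> 0 \<and> \<xi> s \<noteq> 0 \<and> h = g + s"
proof (rule ccontr)
  assume a: "\<not> ?thesis"
  have "pi_tw \<sigma> d \<xi> h = (\<Sum>g\<in>{g. d g \<noteq> 0}. d g * (\<sigma> g (-g+h) * \<xi> (-g+h)))"
    by (rule pi_sum) (use assms in \<open>auto simp: fin_supp_def\<close>)
  also have "\<dots> = 0"
  proof (rule sum.neutral, safe)
    fix g assume "d g \<noteq> 0"
    have "h = g + (-g + h)" by (simp add: add.assoc[symmetric])
    then have "\<xi> (-g+h) = 0" using a \<open>d g \<noteq> 0\<close> by blast
    then show "d g * (\<sigma> g (-g+h) * \<xi> (-g+h)) = 0" by simp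
  qed
  finally show False using assms by simp
qed

lemma pi_zero_outside:
  assumes "fin_supp d" "h \<notin> (\<lambda>(g,s). g + s) ` ({g. d g \<noteq> 0} \<times> {s. \<xi> s \<noteq> 0})"
  shows "pi_tw \<sigma> d \<xi> h = 0"
  using pi_supp[OF assms(1), of \<sigma> \<xi> h] assms(2) by force

lemma pi_fin:
  assumes "fin_supp d" "fin_supp \<xi>"
  shows "fin_supp (pi_tw \<sigma> d \<xi>)"
proof -
  have "{h. pi_tw \<sigma> d \<xi> h \<noteq> 0} \<subseteq> (\<lambda>(g,s). g + s) ` ({g. d g \<noteq> 0} \<times> {s. \<xi> s \<noteq> 0})"
    using pi_zero_outside[OF assms(1)] by blast
  moreover have "finite ((\<lambda>(g,s). g + s) ` ({g. d g \<noteq> 0} \<times> {s. \<xi> s \<noteq> 0}))"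
    using assms by (simp add: fin_supp_def)
  ultimately show ?thesis unfolding fin_supp_def by (rule finite_subset)
qed

lemma pi_scale_x: "pi_tw \<sigma> d (\<lambda>s. a * \<xi> s) h = a * pi_tw \<sigma> d \<xi> h"
  unfolding pi_tw_def Lambda_tw_def by (simp add: sum_distrib_left algebra_simps)

lemma pi_scale_d:
  assumes "fin_supp d"
  shows "pi_tw \<sigma> (\<lambda>g. a * d g) \<xi> h = a * pi_tw \<sigma> d \<xi> h"
proof -
  have fS: "finite {g. d g \<noteq> 0}" using assms by (simp add: fin_supp_def)
  have "pi_tw \<sigma> (\<lambda>g. a * d g) \<xi> h = (\<Sum>g\<in>{g. d g \<noteq> 0}. a * d g * (\<sigma> g (-g+h) * \<xi> (-g+h)))"
    by (rule pi_sum[OF fS]) auto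
  also have "\<dots> = a * pi_tw \<sigma> d \<xi> h"
    by (subst pi_sum[OF fS]) (auto simp: sum_distrib_left algebra_simps)
  finally show ?thesis .
qed

lemma pi_add_d:
  assumes "fin_supp d1" "fin_supp d2"
  shows "pi_tw \<sigma> (\<lambda>g. d1 g + d2 g) \<xi> h = pi_tw \<sigma> d1 \<xi> h + pi_tw \<sigma> d2 \<xi> h"
proof -
  let ?T = "{g. d1 g \<noteq> 0} \<union> {g. d2 g \<noteq> 0}"
  have fS: "finite ?T" using assms by (simp add: fin_supp_def)
  show ?thesis
    by (subst (1 2 3) pi_sum[OF fS]) (auto simp: sum.distrib algebra_simps)
qed

lemma pi_diff_d:
  assumes "fin_supp d1" "fin_supp d2"
  shows "pi_tw \<sigma> (\<lambda>g. d1 g - d2 g) \<xi> h = pi_tw \<sigma> d1 \<xi> h - pi_tw \<sigma> d2 \<xi> h"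
proof -
  let ?T = "{g. d1 g \<noteq> 0} \<union> {g. d2 g \<noteq> 0}"
  have fS: "finite ?T" using assms by (simp add: fin_supp_def)
  show ?thesis
    by (subst (1 2 3) pi_sum[OF fS]) (auto simp: sum_subtractf algebra_simps)
qed

lemma Lambda_norm:
  assumes tw: "twist \<sigma>" and fx: "fin_supp \<xi>"
  shows "fin_supp (Lambda_tw \<sigma> g \<xi>) \<and> l2norm (Lambda_tw \<sigma> g \<xi>) = l2norm \<xi>"
proof -
  let ?S = "{s. \<xi> s \<noteq> 0}"
  have fS: "finite ?S" using fx by (simp add: fin_supp_def)
  have sub: "\<And>h. h \<notin> (+) g ` ?S \<Longrightarrow> Lambda_tw \<sigma> g \<xi> h = 0"
  proof -
    fix h assume "h \<notin> (+) g ` ?S"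
    moreover have "h = g + (-g + h)" by (simp add: add.assoc[symmetric])
    ultimately have "\<xi> (-g+h) = 0" by (metis (mono_tags, lifting) image_eqI mem_Collect_eq)
    then show "Lambda_tw \<sigma> g \<xi> h = 0" unfolding Lambda_tw_def by simp
  qed
  have f1: "fin_supp (Lambda_tw \<sigma> g \<xi>)" unfolding fin_supp_def
    by (rule finite_subset[of _ "(+) g ` ?S"]) (use sub fS in auto)
  have "l2norm (Lambda_tw \<sigma> g \<xi>) = L2_set (\<lambda>h. cmod (Lambda_tw \<sigma> g \<xi> h)) ((+) g ` ?S)"
    by (rule l2norm_fin) (use fS sub in auto)
  also have "\<dots> = L2_set (\<lambda>s. cmod (\<xi> s)) ?S"
    unfolding L2_set_def
    by (subst sum.reindex) (use tw in \<open>auto simp: twist_def Lambda_tw_def norm_mult add.assoc[symmetric]\<close>)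
  also have "\<dots> = l2norm \<xi>" by (rule l2norm_fin[symmetric]) (use fS in auto)
  finally show ?thesis using f1 by simp
qed

lemma pi_crude:
  assumes tw: "twist \<sigma>" and fd: "fin_supp d" and fx: "fin_supp \<xi>"
  shows "l2norm (pi_tw \<sigma> d \<xi>) \<le> (\<Sum>g\<in>{g. d g \<noteq> 0}. cmod (d g)) * l2norm \<xi>"
proof -
  have fS: "finite {g. d g \<noteq> 0}" using fd by (simp add: fin_supp_def)
  have "pi_tw \<sigma> d \<xi> = (\<lambda>h. \<Sum>g\<in>{g. d g \<noteq> 0}. d g * Lambda_tw \<sigma> g \<xi> h)"
    unfolding pi_tw_def by simp
  then have "l2norm (pi_tw \<sigma> d \<xi>) \<le> (\<Sum>g\<in>{g. d g \<noteq> 0}. l2norm (\<lambda>h. d g * Lambda_tw \<sigma> g \<xi> h))"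
    using l2norm_sum[OF fS, of "\<lambda>g h. d g * Lambda_tw \<sigma> g \<xi> h"]
      fin_supp_mult[of "Lambda_tw \<sigma> _ \<xi>"] Lambda_norm[OF tw fx] by auto
  also have "\<dots> = (\<Sum>g\<in>{g. d g \<noteq> 0}. cmod (d g) * l2norm \<xi>)"
  proof (rule sum.cong)
    fix g show "l2norm (\<lambda>h. d g * Lambda_tw \<sigma> g \<xi> h) = cmod (d g) * l2norm \<xi>"
      using l2norm_scale[of "Lambda_tw \<sigma> g \<xi>" "d g"] Lambda_norm[OF tw fx, of g] by simp
  qed simp
  finally show ?thesis by (simp add: sum_distrib_right)
qed

lemma l2norm_sq:
  "(l2norm f)\<^sup>2 = infsum (\<lambda>h. (cmod (f h))\<^sup>2) UNIV"
  unfolding l2norm_def by (simp add: infsum_nonneg)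

lemma opn_key:
  assumes fd: "fin_supp d" and M: "M \<ge> 0" and B: "Bnd \<sigma> d M" and x: "in_ell2 \<xi>"
  shows "in_ell2 (pi_tw \<sigma> d \<xi>) \<and> l2norm (pi_tw \<sigma> d \<xi>) \<le> M * l2norm \<xi>"
proof -
  let ?f = "\<lambda>h. (cmod (pi_tw \<sigma> d \<xi> h))\<^sup>2"
  let ?X = "infsum (\<lambda>h. (cmod (\<xi> h))\<^sup>2) UNIV"
  have sx: "(\<lambda>h. (cmod (\<xi> h))\<^sup>2) summable_on UNIV" using x by (simp add: in_ell2_def)
  have fD: "finite {g. d g \<noteq> 0}" using fd by (simp add: fin_supp_def)
  have bound: "sum ?f H \<le> M\<^sup>2 * ?X" if fH: "finite H" for H
  proof -
    define S where "S = (\<lambda>(g,h). -g + h) ` ({g. d g \<noteq> 0} \<times> H)"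
    have fS: "finite S" unfolding S_def using fD fH by simp
    define \<xi>' where "\<xi>' = (\<lambda>s. if s \<in> S then \<xi> s else 0)"
    have fx': "fin_supp \<xi>'" unfolding fin_supp_def \<xi>'_def
      by (rule finite_subset[OF _ fS]) auto
    have eq: "pi_tw \<sigma> d \<xi> h = pi_tw \<sigma> d \<xi>' h" if "h \<in> H" for h
    proof -
      have "pi_tw \<sigma> d \<xi> h = (\<Sum>g\<in>{g. d g \<noteq> 0}. d g * (\<sigma> g (-g+h) * \<xi> (-g+h)))"
        by (rule pi_sum[OF fD]) auto
      also have "\<dots> = (\<Sum>g\<in>{g. d g \<noteq> 0}. d g * (\<sigma> g (-g+h) * \<xi>' (-g+h)))"
        by (rule sum.cong) (use that in \<open>auto simp: \<xi>'_def S_def\<close>)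
      also have "\<dots> = pi_tw \<sigma> d \<xi>' h"
        by (rule pi_sum[symmetric, OF fD]) auto
      finally show ?thesis .
    qed
    have fo: "fin_supp (pi_tw \<sigma> d \<xi>')" by (rule pi_fin[OF fd fx'])
    let ?O = "H \<union> {h. pi_tw \<sigma> d \<xi>' h \<noteq> 0}"
    have fO: "finite ?O" using fo fH by (simp add: fin_supp_def)
    have "sum ?f H = (\<Sum>h\<in>H. (cmod (pi_tw \<sigma> d \<xi>' h))\<^sup>2)" using eq by simp
    also have "\<dots> \<le> (\<Sum>h\<in>?O. (cmod (pi_tw \<sigma> d \<xi>' h))\<^sup>2)"
      by (rule sum_mono2[OF fO]) auto
    also have "\<dots> = (L2_set (\<lambda>h. cmod (pi_tw \<sigma> d \<xi>' h)) ?O)\<^sup>2"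
      unfolding L2_set_def by (simp add: sum_nonneg)
    also have "\<dots> = (l2norm (pi_tw \<sigma> d \<xi>'))\<^sup>2"
      by (subst l2norm_fin[OF fO]) auto
    also have "\<dots> \<le> (M * l2norm \<xi>')\<^sup>2"
      using B fx' unfolding Bnd_def by (simp add: l2norm_nonneg power_mono)
    also have "\<dots> = M\<^sup>2 * (L2_set (\<lambda>h. cmod (\<xi>' h)) S)\<^sup>2"
      by (subst l2norm_fin[OF fS]) (auto simp: \<xi>'_def power_mult_distrib)
    also have "\<dots> = M\<^sup>2 * (\<Sum>h\<in>S. (cmod (\<xi> h))\<^sup>2)"
      unfolding L2_set_def by (simp add: sum_nonneg \<xi>'_def)
    also have "\<dots> \<le> M\<^sup>2 * ?X"
      by (rule mult_left_mono[OF finite_sum_le_infsum[OF sx fS]]) auto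
    finally show ?thesis .
  qed
  have sf: "?f summable_on UNIV"
    by (rule nonneg_bdd_above_summable_on) (use bound in \<open>auto intro!: bdd_aboveI2\<close>)
  have le: "infsum ?f UNIV \<le> M\<^sup>2 * ?X"
    by (rule infsum_le_finite_sums[OF sf]) (use bound in auto)
  have "l2norm (pi_tw \<sigma> d \<xi>) = sqrt (infsum ?f UNIV)" by (simp add: l2norm_def)
  also have "\<dots> \<le> sqrt (M\<^sup>2 * ?X)" using le by simp
  also have "\<dots> = M * l2norm \<xi>" using M by (simp add: l2norm_def real_sqrt_mult)
  finally show ?thesis using sf by (simp add: in_ell2_def)
qed

lemma opn_le:
  assumes fd: "fin_supp d" and M: "M \<ge> 0" and B: "Bnd \<sigma> d M"
  shows "op_norm (pi_tw \<sigma> d) \<le> M"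
  unfolding op_norm_def
proof (rule cSup_least)
  have "in_ell2 (\<lambda>_::'a. 0::complex)" by (simp add: in_ell2_def)
  moreover have "l2norm (\<lambda>_::'a. 0::complex) \<le> 1" by (simp add: l2norm_def)
  ultimately show "{l2norm (pi_tw \<sigma> d \<xi>) |\<xi>. in_ell2 \<xi> \<and> l2norm \<xi> \<le> 1} \<noteq> {}" by blast
next
  fix x assume "x \<in> {l2norm (pi_tw \<sigma> d \<xi>) |\<xi>. in_ell2 \<xi> \<and> l2norm \<xi> \<le> 1}"
  then obtain \<xi> where x: "x = l2norm (pi_tw \<sigma> d \<xi>)" "in_ell2 \<xi>" "l2norm \<xi> \<le> 1" by blast
  have "x \<le> M * l2norm \<xi>" using opn_key[OF fd M B x(2)] x(1) by simp
  also have "\<dots> \<le> M" using M x(3) by (simp add: mult_left_le)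
  finally show "x \<le> M" .
qed

lemma opn_bdd:
  assumes fd: "fin_supp d" and M: "M \<ge> 0" and B: "Bnd \<sigma> d M"
  shows "bdd_above {l2norm (pi_tw \<sigma> d \<xi>) |\<xi>. in_ell2 \<xi> \<and> l2norm \<xi> \<le> 1}"
proof (rule bdd_aboveI)
  fix x assume "x \<in> {l2norm (pi_tw \<sigma> d \<xi>) |\<xi>. in_ell2 \<xi> \<and> l2norm \<xi> \<le> 1}"
  then obtain \<xi> where x: "x = l2norm (pi_tw \<sigma> d \<xi>)" "in_ell2 \<xi>" "l2norm \<xi> \<le> 1" by blast
  have "x \<le> M * l2norm \<xi>" using opn_key[OF fd M B x(2)] x(1) by simp
  also have "\<dots> \<le> M" using M x(3) by (simp add: mult_left_le)
  finally show "x \<le> M" .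
qed

lemma Bnd_crude:
  assumes tw: "twist \<sigma>" and fd: "fin_supp d"
  shows "Bnd \<sigma> d (\<Sum>g\<in>{g. d g \<noteq> 0}. cmod (d g))"
  unfolding Bnd_def using pi_crude[OF tw fd] by blast

lemma opn_upper:
  assumes tw: "twist \<sigma>" and fd: "fin_supp d" and fx: "fin_supp \<xi>"
  shows "l2norm (pi_tw \<sigma> d \<xi>) \<le> op_norm (pi_tw \<sigma> d) * l2norm \<xi>"
proof (cases "l2norm \<xi> = 0")
  case True
  then have z: "\<And>h. \<xi> h = 0" using l2norm_zero_iff[OF fx] by auto
  have "pi_tw \<sigma> d \<xi> = (\<lambda>_. 0)" unfolding pi_tw_def Lambda_tw_def by (simp add: z)
  then show ?thesis using True by (simp add: l2norm_def)
next
  case False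
  let ?n = "l2norm \<xi>"
  have npos: "?n > 0" using False l2norm_nonneg[of \<xi>] by simp
  define \<eta> where "\<eta> = (\<lambda>s. complex_of_real (1 / ?n) * \<xi> s)"
  have fe: "fin_supp \<eta>" unfolding \<eta>_def by (rule fin_supp_mult[OF fx])
  have ne: "l2norm \<eta> = 1" unfolding \<eta>_def using l2norm_scale[OF fx, of "complex_of_real (1 / ?n)"] npos by (simp add: norm_divide)
  let ?M = "\<Sum>g\<in>{g. d g \<noteq> 0}. cmod (d g)"
  have M: "?M \<ge> 0" by (simp add: sum_nonneg)
  have "l2norm (pi_tw \<sigma> d \<eta>) \<in> {l2norm (pi_tw \<sigma> d \<xi>) |\<xi>. in_ell2 \<xi> \<and> l2norm \<xi> \<le> 1}"
    using in_ell2_fin[OF fe] ne by auto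
  then have le: "l2norm (pi_tw \<sigma> d \<eta>) \<le> op_norm (pi_tw \<sigma> d)"
    unfolding op_norm_def by (rule cSup_upper[OF _ opn_bdd[OF fd M Bnd_crude[OF tw fd]]])
  have "pi_tw \<sigma> d \<eta> = (\<lambda>h. complex_of_real (1 / ?n) * pi_tw \<sigma> d \<xi> h)"
    unfolding \<eta>_def by (intro ext) (rule pi_scale_x)
  then have "l2norm (pi_tw \<sigma> d \<eta>) = l2norm (pi_tw \<sigma> d \<xi>) / ?n"
    using l2norm_scale[OF pi_fin[OF fd fx, where \<sigma>=\<sigma>], of "complex_of_real (1 / ?n)"] npos
    by (simp add: norm_divide)
  with le npos show ?thesis by (simp add: field_simps)
qed

lemma Bnd_opn: "twist \<sigma> \<Longrightarrow> fin_supp d \<Longrightarrow> Bnd \<sigma> d (op_norm (pi_tw \<sigma> d))"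
  unfolding Bnd_def using opn_upper by blast

lemma fin_supp_delta0: "fin_supp delta0"
  unfolding fin_supp_def delta0_def by simp

lemma l2norm_delta0: "l2norm (delta0 :: 'g::group_add \<Rightarrow> complex) = 1"
  by (subst l2norm_fin[of "{0}"]) (auto simp: delta0_def)

lemma pi_delta0:
  assumes tw: "twist \<sigma>" and fd: "fin_supp d"
  shows "pi_tw \<sigma> d delta0 = d"
proof
  fix h
  have fD: "finite {g. d g \<noteq> 0}" using fd by (simp add: fin_supp_def)
  have e: "(-g + h = 0) \<longleftrightarrow> g = h" for g h :: 'a
    by (metis add.left_inverse add_minus_cancel add.right_neutral)
  have "pi_tw \<sigma> d delta0 h = (\<Sum>g\<in>{g. d g \<noteq> 0}. d g * (\<sigma> g (-g+h) * delta0 (-g+h)))"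
    by (rule pi_sum[OF fD]) auto
  also have "\<dots> = (\<Sum>g\<in>{g. d g \<noteq> 0}. if g = h then d h else 0)"
    by (rule sum.cong) (use tw in \<open>auto simp: delta0_def e twist_def\<close>)
  also have "\<dots> = d h" using fD by (simp add: sum.delta')
  finally show "pi_tw \<sigma> d delta0 h = d h" .
qed

lemma opn_nonneg:
  assumes tw: "twist \<sigma>" and fd: "fin_supp d"
  shows "op_norm (pi_tw \<sigma> d) \<ge> 0"
  using opn_upper[OF tw fd fin_supp_delta0] l2norm_nonneg[of "pi_tw \<sigma> d delta0"]
  by (simp add: l2norm_delta0)

lemma l2_le_opn:
  assumes tw: "twist \<sigma>" and fd: "fin_supp d"
  shows "l2norm d \<le> op_norm (pi_tw \<sigma> d)"
  using opn_upper[OF tw fd fin_supp_delta0] by (simp add: l2norm_delta0 pi_delta0[OF tw fd])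

lemma delta0_pi:
  assumes tw: "twist \<sigma>"
  shows "pi_tw \<sigma> delta0 \<xi> = \<xi>"
proof
  fix h
  have "pi_tw \<sigma> delta0 \<xi> h = (\<Sum>g\<in>{0}. delta0 g * (\<sigma> g (-g+h) * \<xi> (-g+h)))"
    by (rule pi_sum) (auto simp: delta0_def)
  then show "pi_tw \<sigma> delta0 \<xi> h = \<xi> h" using tw by (simp add: delta0_def twist_def)
qed

lemma opn_delta0:
  assumes tw: "twist \<sigma>"
  shows "op_norm (pi_tw \<sigma> delta0) = 1"
proof (rule antisym)
  show "op_norm (pi_tw \<sigma> delta0) \<le> 1"
    by (rule opn_le[OF fin_supp_delta0]) (auto simp: Bnd_def delta0_pi[OF tw])
  show "1 \<le> op_norm (pi_tw \<sigma> delta0)"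
    using l2_le_opn[OF tw fin_supp_delta0] by (simp add: l2norm_delta0)
qed

lemma opn_scale_le:
  assumes tw: "twist \<sigma>" and fd: "fin_supp d"
  shows "op_norm (pi_tw \<sigma> (\<lambda>g. a * d g)) \<le> cmod a * op_norm (pi_tw \<sigma> d)"
proof (rule opn_le)
  show "fin_supp (\<lambda>g. a * d g)" by (rule fin_supp_mult[OF fd])
  show "0 \<le> cmod a * op_norm (pi_tw \<sigma> d)" using opn_nonneg[OF tw fd] by simp
  show "Bnd \<sigma> (\<lambda>g. a * d g) (cmod a * op_norm (pi_tw \<sigma> d))"
    unfolding Bnd_def
  proof (intro allI impI)
    fix \<xi> :: "'a \<Rightarrow> complex" assume fx: "fin_supp \<xi>"
    have "pi_tw \<sigma> (\<lambda>g. a * d g) \<xi> = (\<lambda>h. a * pi_tw \<sigma> d \<xi> h)"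
      by (intro ext) (rule pi_scale_d[OF fd])
    then have "l2norm (pi_tw \<sigma> (\<lambda>g. a * d g) \<xi>) = cmod a * l2norm (pi_tw \<sigma> d \<xi>)"
      using l2norm_scale[OF pi_fin[OF fd fx]] by simp
    also have "\<dots> \<le> cmod a * (op_norm (pi_tw \<sigma> d) * l2norm \<xi>)"
      by (rule mult_left_mono[OF opn_upper[OF tw fd fx]]) simp
    finally show "l2norm (pi_tw \<sigma> (\<lambda>g. a * d g) \<xi>) \<le> cmod a * op_norm (pi_tw \<sigma> d) * l2norm \<xi>"
      by (simp add: mult.assoc)
  qed
qed

lemma opn_scale:
  assumes tw: "twist \<sigma>" and fd: "fin_supp d"
  shows "op_norm (pi_tw \<sigma> (\<lambda>g. a * d g)) = cmod a * op_norm (pi_tw \<sigma> d)"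
proof (cases "a = 0")
  case True
  have "op_norm (pi_tw \<sigma> (\<lambda>g. a * d g)) \<le> 0"
    using opn_scale_le[OF tw fd, of a] True by simp
  moreover have "op_norm (pi_tw \<sigma> (\<lambda>g. a * d g)) \<ge> 0"
    by (rule opn_nonneg[OF tw fin_supp_mult[OF fd]])
  ultimately show ?thesis using True by simp
next
  case False
  have "op_norm (pi_tw \<sigma> d) = op_norm (pi_tw \<sigma> (\<lambda>g. inverse a * (a * d g)))"
    using False by (simp add: mult.assoc[symmetric])
  also have "\<dots> \<le> cmod (inverse a) * op_norm (pi_tw \<sigma> (\<lambda>g. a * d g))"
    by (rule opn_scale_le[OF tw fin_supp_mult[OF fd]])
  finally have h: "op_norm (pi_tw \<sigma> d) \<le> cmod (inverse a) * op_norm (pi_tw \<sigma> (\<lambda>g. a * d g))" .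
  have "cmod a * op_norm (pi_tw \<sigma> d) \<le> cmod a * (cmod (inverse a) * op_norm (pi_tw \<sigma> (\<lambda>g. a * d g)))"
    by (rule mult_left_mono[OF h]) simp
  also have "\<dots> = op_norm (pi_tw \<sigma> (\<lambda>g. a * d g))"
    using False by (simp add: norm_inverse mult.assoc[symmetric])
  finally have "cmod a * op_norm (pi_tw \<sigma> d) \<le> op_norm (pi_tw \<sigma> (\<lambda>g. a * d g))" .
  with opn_scale_le[OF tw fd, of a] show ?thesis by simp
qed

definition QF :: "'a set \<Rightarrow> ('a \<Rightarrow> 'a \<Rightarrow> complex) \<Rightarrow> ('a \<Rightarrow> complex) \<Rightarrow> complex" where
  "QF W K a = (\<Sum>x\<in>W. \<Sum>y\<in>W. cnj (a x) * a y * K x y)"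

definition psd :: "'a set \<Rightarrow> ('a \<Rightarrow> 'a \<Rightarrow> complex) \<Rightarrow> bool" where
  "psd W K \<longleftrightarrow> (\<forall>a. Im (QF W K a) = 0 \<and> 0 \<le> Re (QF W K a))"

lemma psd_sub:
  assumes "psd W K" "V \<subseteq> W" "finite W"
  shows "psd V K"
  unfolding psd_def
proof
  fix a :: "'a \<Rightarrow> complex"
  define a' where "a' = (\<lambda>x. if x \<in> V then a x else 0)"
  have "QF W K a' = (\<Sum>x\<in>V. \<Sum>y\<in>W. cnj (a' x) * a' y * K x y)"
    unfolding QF_def by (rule sum.mono_neutral_right[OF assms(3) assms(2)]) (auto simp: a'_def)
  also have "\<dots> = (\<Sum>x\<in>V. \<Sum>y\<in>V. cnj (a' x) * a' y * K x y)"
    by (rule sum.cong[OF refl], rule sum.mono_neutral_right[OF assms(3) assms(2)]) (auto simp: a'_def)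
  also have "\<dots> = QF V K a" unfolding QF_def a'_def by simp
  finally show "Im (QF V K a) = 0 \<and> 0 \<le> Re (QF V K a)"
    using assms(1) unfolding psd_def by metis
qed

lemma psd_diag:
  assumes "psd W K" "x \<in> W" "finite W"
  shows "Im (K x x) = 0 \<and> 0 \<le> Re (K x x)"
proof -
  have "psd {x} K" by (rule psd_sub[OF assms(1) _ assms(3)]) (use assms in auto)
  then have "Im (QF {x} K (\<lambda>_. 1)) = 0 \<and> 0 \<le> Re (QF {x} K (\<lambda>_. 1))" unfolding psd_def by simp
  then show ?thesis by (simp add: QF_def)
qed

lemma psd_herm:
  assumes "psd W K" "x \<in> W" "y \<in> W" "finite W"
  shows "K y x = cnj (K x y)"
proof (cases "x = y")
  case True
  then show ?thesis using psd_diag[OF assms(1,2,4)] by (simp add: complex_eq_iff)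
next
  case False
  have p: "psd {x, y} K" by (rule psd_sub[OF assms(1) _ assms(4)]) (use assms in auto)
  have Q: "QF {x,y} K a = cnj (a x) * a x * K x x + cnj (a x) * a y * K x y
     + cnj (a y) * a x * K y x + cnj (a y) * a y * K y y" for a
    using False by (simp add: QF_def)
  have 1: "Im (QF {x,y} K (\<lambda>_. 1)) = 0" using p unfolding psd_def by simp
  have 2: "Im (QF {x,y} K (\<lambda>z. if z = x then 1 else \<i>)) = 0" using p unfolding psd_def by simp
  have d1: "Im (K x x) = 0" "Im (K y y) = 0" using psd_diag[OF assms(1) _ assms(4)] assms(2,3) by auto
  from 1 2 d1 have "Im (K x y) + Im (K y x) = 0" "Re (K x y) - Re (K y x) = 0"
    using False by (simp_all add: Q)
  then show ?thesis by (simp add: complex_eq_iff)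
qed

lemma psd_zero_row:
  assumes "psd W K" "s \<in> W" "y \<in> W" "finite W" "K s s = 0"
  shows "K s y = 0"
proof (rule ccontr)
  assume nz: "K s y \<noteq> 0"
  then have sy: "s \<noteq> y" using assms(5) by auto
  have p: "psd {s, y} K" by (rule psd_sub[OF assms(1) _ assms(4)]) (use assms in auto)
  define z where "z = K s y"
  have h: "K y s = cnj z" unfolding z_def by (rule psd_herm[OF assms(1,2,3,4)])
  have dy: "Im (K y y) = 0" using psd_diag[OF assms(1,3,4)] by simp
  define T where "T = (Re (K y y) + 1) / (2 * (cmod z)\<^sup>2)"
  have zpos: "(cmod z)\<^sup>2 > 0" using nz z_def by simp
  define a where "a = (\<lambda>w. if w = s then - (complex_of_real T * z) else 1)"
  have "QF {s,y} K a = cnj (a s) * a s * K s s + cnj (a s) * a y * K s y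
     + cnj (a y) * a s * K y s + cnj (a y) * a y * K y y"
    using sy by (simp add: QF_def)
  also have "\<dots> = - (complex_of_real T * (cnj z * z)) - complex_of_real T * (z * cnj z) + K y y"
    using sy assms(5) h by (simp add: a_def z_def algebra_simps)
  finally have "Re (QF {s,y} K a) = - 2 * T * (cmod z)\<^sup>2 + Re (K y y)"
    by (simp add: complex_norm_square[symmetric] mult.commute[of "cnj z"])
  also have "\<dots> = -1" unfolding T_def using zpos by (simp add: field_simps)
  finally show False using p unfolding psd_def by (metis neg_0_le_iff_le not_one_le_zero)
qed

lemma psd_schur:
  assumes p: "psd W K" and fW: "finite W" and s: "s \<in> W" and r: "K s s = complex_of_real r" "r > 0"
  shows "psd (W - {s}) (\<lambda>x y. K x y - K x s * K s y / complex_of_real r)"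
  unfolding psd_def
proof
  fix a :: "'a \<Rightarrow> complex"
  define V where "V = W - {s}"
  let ?K' = "\<lambda>x y. K x y - K x s * K s y / complex_of_real r"
  have fV: "finite V" using fW by (simp add: V_def)
  have W: "W = insert s V" using s by (auto simp: V_def)
  have sV: "s \<notin> V" by (simp add: V_def)
  define v where "v = (\<Sum>y\<in>V. a y * K s y)"
  define l where "l = - v / complex_of_real r"
  define a' where "a' = (\<lambda>z. if z = s then l else a z)"
  have herm: "\<And>x. x \<in> W \<Longrightarrow> K x s = cnj (K s x)" using psd_herm[OF p s _ fW] by blast
  have cv: "(\<Sum>x\<in>V. cnj (a x) * K x s) = cnj v"
    unfolding v_def by (simp add: herm W)
  have a'V: "\<And>x. x \<in> V \<Longrightarrow> a' x = a x" using sV by (auto simp: a'_def)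
  have "QF W K a' = (\<Sum>x\<in>insert s V. \<Sum>y\<in>insert s V. cnj (a' x) * a' y * K x y)"
    unfolding QF_def W ..
  also have "\<dots> = cnj l * l * K s s + (\<Sum>y\<in>V. cnj l * a' y * K s y)
        + (\<Sum>x\<in>V. cnj (a' x) * l * K x s + (\<Sum>y\<in>V. cnj (a' x) * a' y * K x y))"
    by (simp add: fV sV a'_def sum.distrib)
  also have "\<dots> = cnj l * l * K s s + (\<Sum>y\<in>V. cnj l * a y * K s y)
        + (\<Sum>x\<in>V. cnj (a x) * l * K x s + (\<Sum>y\<in>V. cnj (a x) * a y * K x y))"
    by (simp add: a'V)
  also have "\<dots> = cnj l * l * K s s + cnj l * v + l * cnj v + QF V K a"
  proof -
    have e1: "(\<Sum>y\<in>V. cnj l * a y * K s y) = cnj l * v"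
      unfolding v_def by (simp add: sum_distrib_left mult.assoc)
    have e2: "(\<Sum>x\<in>V. cnj (a x) * l * K x s) = l * cnj v"
      unfolding cv[symmetric] by (simp add: sum_distrib_left algebra_simps)
    show ?thesis unfolding QF_def sum.distrib e1 e2 by simp
  qed
  also have "\<dots> = QF V K a - cnj v * v / complex_of_real r"
  proof -
    have cl: "cnj l = - cnj v / complex_of_real r" by (simp add: l_def)
    have R: "complex_of_real r \<noteq> 0" using r by simp
    have e1: "cnj l * l * K s s = cnj v * v / complex_of_real r"
      unfolding cl r(1) unfolding l_def using R by (simp add: field_simps)
    have e2: "cnj l * v = - (cnj v * v / complex_of_real r)" unfolding cl by simp
    have e3: "l * cnj v = - (cnj v * v / complex_of_real r)" unfolding l_def by (simp add: mult.commute)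
    show ?thesis unfolding e1 e2 e3 by simp
  qed
  also have "\<dots> = QF V ?K' a"
  proof -
    have "QF V ?K' a = QF V K a - (\<Sum>x\<in>V. \<Sum>y\<in>V. cnj (a x) * a y * (K x s * K s y / complex_of_real r))"
      unfolding QF_def by (simp add: right_diff_distrib sum_subtractf)
    also have "(\<Sum>x\<in>V. \<Sum>y\<in>V. cnj (a x) * a y * (K x s * K s y / complex_of_real r))
       = (\<Sum>x\<in>V. cnj (a x) * K x s) * v / complex_of_real r"
    proof -
      have "(\<Sum>x\<in>V. \<Sum>y\<in>V. cnj (a x) * a y * (K x s * K s y / complex_of_real r))
         = (\<Sum>x\<in>V. \<Sum>y\<in>V. (cnj (a x) * K x s) * (a y * K s y)) / complex_of_real r"
        unfolding sum_divide_distrib by (rule sum.cong[OF refl], rule sum.cong[OF refl]) simp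
      also have "\<dots> = (\<Sum>x\<in>V. cnj (a x) * K x s) * v / complex_of_real r"
        unfolding v_def sum_product ..
      finally show ?thesis .
    qed
    finally show ?thesis using cv by simp
  qed
  finally have "QF V ?K' a = QF W K a'" by simp
  then show "Im (QF (W - {s}) ?K' a) = 0 \<and> 0 \<le> Re (QF (W - {s}) ?K' a)"
    using p unfolding psd_def V_def by metis
qed

lemma cholesky:
  assumes "finite W"
  shows "psd W K \<Longrightarrow> \<exists>(n::nat) B. \<forall>x\<in>W. \<forall>y\<in>W. K x y = (\<Sum>k<n. cnj (B k x) * B k y)"
  using assms
proof (induction W arbitrary: K rule: finite_induct)
  case empty
  then show ?case by auto
next
  case (insert s V)
  have fW: "finite (insert s V)" using insert by simp
  have p: "psd (insert s V) K" using insert by simp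
  have d: "Im (K s s) = 0 \<and> 0 \<le> Re (K s s)" using psd_diag[OF p _ fW] by simp
  define r where "r = Re (K s s)"
  have r: "K s s = complex_of_real r" "r \<ge> 0" using d by (auto simp: r_def complex_eq_iff)
  show ?case
  proof (cases "r = 0")
    case True
    have pV: "psd V K" by (rule psd_sub[OF p _ fW]) auto
    obtain n :: nat and B where B: "\<forall>x\<in>V. \<forall>y\<in>V. K x y = (\<Sum>k<n. cnj (B k x) * B k y)"
      using insert.IH[OF pV] insert by blast
    have z1: "K s y = 0" if "y \<in> insert s V" for y
      by (rule psd_zero_row[OF p _ that fW]) (use r True in auto)
    have z2: "K y s = 0" if "y \<in> insert s V" for y
      using psd_herm[OF p _ that fW, of s] z1[OF that] by simp
    show ?thesis
    proof (intro exI ballI)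
      fix x y assume xy: "x \<in> insert s V" "y \<in> insert s V"
      show "K x y = (\<Sum>k<n. cnj (((B k)(s := 0)) x) * ((B k)(s := 0)) y)"
      proof (cases "x = s \<or> y = s")
        case True
        then show ?thesis using z1 z2 xy by auto
      next
        case False
        then show ?thesis using B xy by auto
      qed
    qed
  next
    case False
    then have rp: "r > 0" using r by simp
    let ?K' = "\<lambda>x y. K x y - K x s * K s y / complex_of_real r"
    have "psd (insert s V - {s}) ?K'" by (rule psd_schur[OF p fW _ r(1) rp]) simp
    moreover have "insert s V - {s} = V" using insert by auto
    ultimately have pV: "psd V ?K'" by simp
    obtain n :: nat and B where B: "\<forall>x\<in>V. \<forall>y\<in>V. ?K' x y = (\<Sum>k<n. cnj (B k x) * B k y)"
      using insert.IH[OF pV] insert by blast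
    define w where "w = (\<lambda>y. K s y / complex_of_real (sqrt r))"
    define B' where "B' = (\<lambda>k. if k < n then (B k)(s := 0) else w)"
    have herm: "\<And>x. x \<in> insert s V \<Longrightarrow> K x s = cnj (K s x)" using psd_herm[OF p _ _ fW] by blast
    have ww: "cnj (w x) * w y = K x s * K s y / complex_of_real r" if "x \<in> insert s V" for x y
    proof -
      have "cnj (w x) * w y = cnj (K s x) * K s y / (complex_of_real (sqrt r) * complex_of_real (sqrt r))"
        by (simp add: w_def)
      also have "complex_of_real (sqrt r) * complex_of_real (sqrt r) = complex_of_real r"
        using rp by (simp flip: of_real_mult)
      finally show ?thesis using herm[OF that] by simp
    qed
    show ?thesis
    proof (intro exI ballI)
      fix x y assume xy: "x \<in> insert s V" "y \<in> insert s V"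
      have sum: "(\<Sum>k<Suc n. cnj (B' k x) * B' k y)
          = (\<Sum>k<n. cnj (((B k)(s := 0)) x) * ((B k)(s := 0)) y) + K x s * K s y / complex_of_real r"
        using ww[OF xy(1)] by (simp add: B'_def)
      show "K x y = (\<Sum>k<Suc n. cnj (B' k x) * B' k y)"
      proof (cases "x = s \<or> y = s")
        case True
        then show ?thesis unfolding sum using rp r(1) by auto
      next
        case False
        then have "K x y - K x s * K s y / complex_of_real r = (\<Sum>k<n. cnj (B k x) * B k y)"
          using B xy by auto
        then show ?thesis unfolding sum using False by (simp add: diff_eq_eq)
      qed
    qed
  qed
qed

lemma pos_def_funD:
  "pos_def_fun \<phi> \<Longrightarrow> finite F \<Longrightarrow> (let s = (\<Sum>x\<in>F. \<Sum>y\<in>F. cnj (c x) * c y * \<phi> (- x + y)) in Im s = 0 \<and> Re s \<ge> 0)"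
  unfolding pos_def_fun_def by (erule allE[of _ F], erule allE[of _ c]) simp

lemma pd_psd:
  assumes pd: "pos_def_fun \<phi>" and fW: "finite W"
  shows "psd W (\<lambda>x y. \<phi> (x + - y))"
  unfolding psd_def
proof
  fix a :: "'a \<Rightarrow> complex"
  have inj: "inj_on uminus W" by (auto simp: inj_on_def)
  let ?c = "\<lambda>z. a (- z)"
  have "(\<Sum>x\<in>uminus ` W. \<Sum>y\<in>uminus ` W. cnj (?c x) * ?c y * \<phi> (- x + y)) = QF W (\<lambda>x y. \<phi> (x + - y)) a"
    unfolding QF_def by (simp add: sum.reindex[OF inj])
  moreover have "let s = (\<Sum>x\<in>uminus ` W. \<Sum>y\<in>uminus ` W. cnj (?c x) * ?c y * \<phi> (- x + y)) in Im s = 0 \<and> Re s \<ge> 0"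
    using pos_def_funD[OF pd, of "uminus ` W" ?c] fW by simp
  ultimately show "Im (QF W (\<lambda>x y. \<phi> (x + - y)) a) = 0 \<and> 0 \<le> Re (QF W (\<lambda>x y. \<phi> (x + - y)) a)"
    by (simp add: Let_def)
qed

lemma schur:
  assumes tw: "twist \<sigma>" and pd: "pos_def_fun \<phi>" and fc: "fin_supp c" and fx: "fin_supp \<xi>"
  shows "l2norm (pi_tw \<sigma> (\<lambda>g. \<phi> g * c g) \<xi>) \<le> Re (\<phi> 0) * op_norm (pi_tw \<sigma> c) * l2norm \<xi>"
proof -
  define Sc where "Sc = {g. c g \<noteq> 0}"
  define Sx where "Sx = {s. \<xi> s \<noteq> 0}"
  define H where "H = (\<lambda>(g,s). g + s) ` (Sc \<times> Sx)"
  define W where "W = H \<union> Sx"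
  have fSc: "finite Sc" using fc by (simp add: Sc_def fin_supp_def)
  have fSx: "finite Sx" using fx by (simp add: Sx_def fin_supp_def)
  have fH: "finite H" unfolding H_def using fSc fSx by simp
  have fW: "finite W" unfolding W_def using fH fSx by simp
  let ?K = "\<lambda>x y. \<phi> (x + - y)"
  obtain n :: nat and B where B: "\<forall>x\<in>W. \<forall>y\<in>W. ?K x y = (\<Sum>k<n. cnj (B k x) * B k y)"
    using cholesky[OF fW pd_psd[OF pd fW]] by blast
  define p where "p = Re (\<phi> 0)"
  have p0: "p \<ge> 0"
    using psd_diag[OF pd_psd[OF pd, of "{0}"], of 0] by (simp add: p_def)
  have pB: "L2_set (\<lambda>k. cmod (B k h)) {..<n} = sqrt p" if "h \<in> W" for h
  proof -
    have "?K h h = (\<Sum>k<n. cnj (B k h) * B k h)" using B that by blast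
    then have "\<phi> 0 = (\<Sum>k<n. cnj (B k h) * B k h)" by simp
    also have "\<dots> = (\<Sum>k<n. complex_of_real ((cmod (B k h))\<^sup>2))"
      by (rule sum.cong[OF refl]) (simp only: complex_norm_square mult.commute)
    also have "\<dots> = complex_of_real (\<Sum>k<n. (cmod (B k h))\<^sup>2)" by simp
    finally have "p = (\<Sum>k<n. (cmod (B k h))\<^sup>2)" by (simp add: p_def)
    then show ?thesis by (simp add: L2_set_def)
  qed
  define N where "N = op_norm (pi_tw \<sigma> c)"
  have N0: "N \<ge> 0" unfolding N_def by (rule opn_nonneg[OF tw fc])
  define \<xi>k where "\<xi>k = (\<lambda>k y. B k y * \<xi> y)"
  have fxk: "fin_supp (\<xi>k k)" for k unfolding \<xi>k_def by (rule fin_supp_mult[OF fx])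
  define v where "v = (\<lambda>k. pi_tw \<sigma> c (\<xi>k k))"
  have fpc: "fin_supp (\<lambda>g. \<phi> g * c g)" by (rule fin_supp_mult[OF fc])
  have eq: "pi_tw \<sigma> (\<lambda>g. \<phi> g * c g) \<xi> h = (\<Sum>k<n. cnj (B k h) * v k h)" if hH: "h \<in> H" for h
  proof -
    have "pi_tw \<sigma> (\<lambda>g. \<phi> g * c g) \<xi> h = (\<Sum>g\<in>Sc. \<phi> g * c g * (\<sigma> g (-g+h) * \<xi> (-g+h)))"
      by (rule pi_sum[OF fSc]) (auto simp: Sc_def)
    also have "\<dots> = (\<Sum>g\<in>Sc. \<Sum>k<n. cnj (B k h) * (c g * (\<sigma> g (-g+h) * (B k (-g+h) * \<xi> (-g+h)))))"
    proof (rule sum.cong[OF refl])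
      fix g assume "g \<in> Sc"
      show "\<phi> g * c g * (\<sigma> g (-g+h) * \<xi> (-g+h))
          = (\<Sum>k<n. cnj (B k h) * (c g * (\<sigma> g (-g+h) * (B k (-g+h) * \<xi> (-g+h)))))"
      proof (cases "\<xi> (-g+h) = 0")
        case True
        then show ?thesis by simp
      next
        case False
        then have "-g+h \<in> W" "h \<in> W" using hH by (auto simp: W_def Sx_def)
        then have "?K h (-g+h) = (\<Sum>k<n. cnj (B k h) * B k (-g+h))" using B by blast
        moreover have "h + - (-g + h) = g" by (simp add: minus_add add.assoc[symmetric])
        ultimately have pg: "\<phi> g = (\<Sum>k<n. cnj (B k h) * B k (-g+h))" by simp
        have "\<phi> g * c g * (\<sigma> g (-g+h) * \<xi> (-g+h))
           = (\<Sum>k<n. cnj (B k h) * B k (-g+h) * (c g * (\<sigma> g (-g+h) * \<xi> (-g+h))))"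
          unfolding pg by (simp add: sum_distrib_right mult.assoc)
        also have "\<dots> = (\<Sum>k<n. cnj (B k h) * (c g * (\<sigma> g (-g+h) * (B k (-g+h) * \<xi> (-g+h)))))"
          by (rule sum.cong[OF refl]) (simp add: mult_ac)
        finally show ?thesis .
      qed
    qed
    also have "\<dots> = (\<Sum>k<n. cnj (B k h) * (\<Sum>g\<in>Sc. c g * (\<sigma> g (-g+h) * (B k (-g+h) * \<xi> (-g+h)))))"
      by (subst sum.swap) (simp add: sum_distrib_left)
    also have "\<dots> = (\<Sum>k<n. cnj (B k h) * v k h)"
    proof (rule sum.cong[OF refl])
      fix k
      have "v k h = (\<Sum>g\<in>Sc. c g * (\<sigma> g (-g+h) * \<xi>k k (-g+h)))"
        unfolding v_def by (rule pi_sum[OF fSc]) (auto simp: Sc_def)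
      then show "cnj (B k h) * (\<Sum>g\<in>Sc. c g * (\<sigma> g (-g+h) * (B k (-g+h) * \<xi> (-g+h))))
          = cnj (B k h) * v k h" by (simp add: \<xi>k_def)
    qed
    finally show ?thesis .
  qed
  have out1: "pi_tw \<sigma> (\<lambda>g. \<phi> g * c g) \<xi> h = 0" if "h \<notin> H" for h
  proof (rule ccontr)
    assume "pi_tw \<sigma> (\<lambda>g. \<phi> g * c g) \<xi> h \<noteq> 0"
    from pi_supp[OF fpc this] obtain g s where "\<phi> g * c g \<noteq> 0" "\<xi> s \<noteq> 0" "h = g + s" by blast
    then have "h \<in> H" unfolding H_def Sc_def Sx_def by auto
    with that show False by simp
  qed
  have out2: "v k h = 0" if "h \<notin> H" for k h
  proof (rule ccontr)
    assume "v k h \<noteq> 0"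
    from pi_supp[OF fc this[unfolded v_def]] obtain g s where "c g \<noteq> 0" "\<xi>k k s \<noteq> 0" "h = g + s" by blast
    then have "h \<in> H" unfolding H_def Sc_def Sx_def \<xi>k_def by auto
    with that show False by simp
  qed
  have "l2norm (pi_tw \<sigma> (\<lambda>g. \<phi> g * c g) \<xi>) = L2_set (\<lambda>h. cmod (pi_tw \<sigma> (\<lambda>g. \<phi> g * c g) \<xi> h)) H"
    by (rule l2norm_fin[OF fH out1])
  also have "\<dots> \<le> L2_set (\<lambda>h. sqrt p * L2_set (\<lambda>k. cmod (v k h)) {..<n}) H"
  proof (rule L2_set_mono)
    fix h assume hH: "h \<in> H"
    have "cmod (pi_tw \<sigma> (\<lambda>g. \<phi> g * c g) \<xi> h) = cmod (\<Sum>k<n. cnj (B k h) * v k h)" using eq[OF hH] by simp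
    also have "\<dots> \<le> (\<Sum>k<n. \<bar>cmod (B k h)\<bar> * \<bar>cmod (v k h)\<bar>)"
      by (rule order_trans[OF norm_sum]) (simp add: norm_mult)
    also have "\<dots> \<le> L2_set (\<lambda>k. cmod (B k h)) {..<n} * L2_set (\<lambda>k. cmod (v k h)) {..<n}"
      by (rule L2_set_mult_ineq)
    also have "\<dots> = sqrt p * L2_set (\<lambda>k. cmod (v k h)) {..<n}"
      using pB hH by (simp add: W_def)
    finally show "cmod (pi_tw \<sigma> (\<lambda>g. \<phi> g * c g) \<xi> h) \<le> sqrt p * L2_set (\<lambda>k. cmod (v k h)) {..<n}" .
  qed simp
  also have "\<dots> = sqrt p * L2_set (\<lambda>k. L2_set (\<lambda>h. cmod (v k h)) H) {..<n}"
    using L2_set_swap[of "\<lambda>h k. cmod (v k h)" "{..<n}" H] p0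
    by (simp add: L2_set_right_distrib[symmetric])
  also have "\<dots> = sqrt p * L2_set (\<lambda>k. l2norm (v k)) {..<n}"
    using l2norm_fin[OF fH out2] by simp
  also have "\<dots> \<le> sqrt p * L2_set (\<lambda>k. N * l2norm (\<xi>k k)) {..<n}"
  proof (rule mult_left_mono[OF L2_set_mono])
    fix k show "l2norm (v k) \<le> N * l2norm (\<xi>k k)"
      unfolding v_def N_def by (rule opn_upper[OF tw fc fxk])
  qed (simp_all add: l2norm_nonneg p0)
  also have "\<dots> = sqrt p * N * L2_set (\<lambda>k. l2norm (\<xi>k k)) {..<n}"
    using N0 by (simp add: L2_set_right_distrib[symmetric])
  also have "L2_set (\<lambda>k. l2norm (\<xi>k k)) {..<n} = sqrt p * l2norm \<xi>"
  proof -
    have z: "\<And>k y. y \<notin> Sx \<Longrightarrow> \<xi>k k y = 0" by (simp add: \<xi>k_def Sx_def)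
    have "L2_set (\<lambda>k. l2norm (\<xi>k k)) {..<n} = L2_set (\<lambda>k. L2_set (\<lambda>y. cmod (B k y) * cmod (\<xi> y)) Sx) {..<n}"
      using l2norm_fin[OF fSx z] by (simp add: \<xi>k_def norm_mult)
    also have "\<dots> = L2_set (\<lambda>y. L2_set (\<lambda>k. cmod (B k y) * cmod (\<xi> y)) {..<n}) Sx"
      by (rule L2_set_swap)
    also have "\<dots> = L2_set (\<lambda>y. L2_set (\<lambda>k. cmod (B k y)) {..<n} * cmod (\<xi> y)) Sx"
      by (simp add: L2_set_left_distrib)
    also have "\<dots> = L2_set (\<lambda>y. sqrt p * cmod (\<xi> y)) Sx"
      by (rule L2_set_cong) (auto simp: pB W_def)
    also have "\<dots> = sqrt p * L2_set (\<lambda>y. cmod (\<xi> y)) Sx"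
      by (rule L2_set_right_distrib[symmetric]) (simp add: p0)
    also have "\<dots> = sqrt p * l2norm \<xi>"
      using l2norm_fin[OF fSx, of \<xi>] by (simp add: Sx_def)
    finally show ?thesis .
  qed
  finally show ?thesis using p0 by (simp add: N_def p_def mult_ac)
qed

lemma twist_one: "twist (\<lambda>_ _. 1 :: complex)"
  by (simp add: twist_def)

lemma content_bound:
  assumes fE: "finite E" and sub: "{g. f g \<noteq> 0} \<subseteq> E" and fx: "fin_supp \<xi>"
  shows "l2norm (pi_lambda f \<xi>) \<le> haagerup_content E * l2norm f * l2norm \<xi>"
proof -
  let ?t = "\<lambda>_ _. 1 :: complex"
  have ff: "fin_supp f" unfolding fin_supp_def using finite_subset[OF sub fE] .
  show ?thesis
  proof (cases "l2norm f = 0")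
    case True
    then have z: "\<And>g. f g = 0" using l2norm_zero_iff[OF ff] by auto
    have "pi_lambda f \<xi> = (\<lambda>_. 0)" unfolding pi_lambda_def pi_tw_def by (simp add: z)
    then show ?thesis using True by (simp add: l2norm_def)
  next
    case False
    let ?n = "l2norm f"
    have npos: "?n > 0" using False l2norm_nonneg[of f] by simp
    define f' where "f' = (\<lambda>g. complex_of_real (1 / ?n) * f g)"
    have ff': "fin_supp f'" unfolding f'_def by (rule fin_supp_mult[OF ff])
    have nf': "l2norm f' = 1" unfolding f'_def
      using l2norm_scale[OF ff, of "complex_of_real (1 / ?n)"] npos by (simp add: norm_divide)
    have sub': "{g. f' g \<noteq> 0} \<subseteq> E" using sub by (auto simp: f'_def)
    let ?X = "{op_norm (pi_lambda f) |f. {g. f g \<noteq> 0} \<subseteq> E \<and> l2norm f = 1}"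
    have bdd: "bdd_above ?X"
    proof (rule bdd_aboveI)
      fix x assume "x \<in> ?X"
      then obtain h where h: "x = op_norm (pi_lambda h)" "{g. h g \<noteq> 0} \<subseteq> E" "l2norm h = 1" by blast
      have fh: "fin_supp h" unfolding fin_supp_def using finite_subset[OF h(2) fE] .
      have "x \<le> (\<Sum>g\<in>{g. h g \<noteq> 0}. cmod (h g))"
        unfolding h(1) pi_lambda_def by (rule opn_le[OF fh _ Bnd_crude[OF twist_one fh]]) (simp add: sum_nonneg)
      also have "\<dots> \<le> (\<Sum>g\<in>E. 1)"
      proof -
        have "(\<Sum>g\<in>{g. h g \<noteq> 0}. cmod (h g)) \<le> (\<Sum>g\<in>{g. h g \<noteq> 0}. 1)"
          by (rule sum_mono) (use point_le_l2norm[OF fh] h(3) in auto)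
        also have "\<dots> \<le> (\<Sum>g\<in>E. 1)" by (rule sum_mono2[OF fE h(2)]) simp
        finally show ?thesis .
      qed
      finally show "x \<le> real (card E)" by simp
    qed
    have "op_norm (pi_lambda f') \<in> ?X" using sub' nf' by blast
    then have le: "op_norm (pi_lambda f') \<le> haagerup_content E"
      unfolding haagerup_content_def by (rule cSup_upper[OF _ bdd])
    have "op_norm (pi_lambda f') = (1 / ?n) * op_norm (pi_lambda f)"
      unfolding pi_lambda_def f'_def using opn_scale[OF twist_one ff, of "complex_of_real (1 / ?n)"] npos by (simp add: norm_divide)
    then have "op_norm (pi_lambda f) = ?n * op_norm (pi_lambda f')" using npos by simp
    also have "\<dots> \<le> ?n * haagerup_content E" by (rule mult_left_mono[OF le]) (use npos in simp)
    finally have opf: "op_norm (pi_lambda f) \<le> haagerup_content E * ?n" by (simp add: mult.commute)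
    have "l2norm (pi_lambda f \<xi>) \<le> op_norm (pi_lambda f) * l2norm \<xi>"
      unfolding pi_lambda_def by (rule opn_upper[OF twist_one ff fx])
    also have "\<dots> \<le> haagerup_content E * ?n * l2norm \<xi>"
      by (rule mult_right_mono[OF opf l2norm_nonneg])
    finally show ?thesis .
  qed
qed

lemma l2norm_abs: "l2norm (\<lambda>s. complex_of_real (cmod (\<xi> s))) = l2norm \<xi>"
  unfolding l2norm_def by simp

lemma tail_bound:
  assumes tw: "twist \<sigma>" and ft: "fin_supp \<tau>" and fx: "fin_supp \<xi>" and fI: "finite I"
    and fD: "\<And>i. i \<in> I \<Longrightarrow> fin_supp (Dn i)"
    and cover: "\<And>g. cmod (\<tau> g) \<le> (\<Sum>i\<in>I. cmod (Dn i g))"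
    and fE: "\<And>i. i \<in> I \<Longrightarrow> finite (E i)"
    and sE: "\<And>i. i \<in> I \<Longrightarrow> {g. Dn i g \<noteq> 0} \<subseteq> E i"
  shows "l2norm (pi_tw \<sigma> \<tau> \<xi>) \<le> (\<Sum>i\<in>I. haagerup_content (E i) * l2norm (Dn i) * l2norm \<xi>)"
proof -
  define T where "T = {g. \<tau> g \<noteq> 0} \<union> (\<Union>i\<in>I. {g. Dn i g \<noteq> 0})"
  have fT: "finite T" unfolding T_def using ft fD fI by (auto simp: fin_supp_def)
  define X where "X = (\<lambda>s. complex_of_real (cmod (\<xi> s)))"
  define A where "A = (\<lambda>i g. complex_of_real (cmod (Dn i g)))"
  have fX: "fin_supp X" unfolding X_def using fx by (simp add: fin_supp_def)
  have fA: "fin_supp (A i)" if "i \<in> I" for i unfolding A_def using fD[OF that] by (simp add: fin_supp_def)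
  define F where "F = (\<lambda>i. pi_lambda (A i) X)"
  have fF: "fin_supp (F i)" if "i \<in> I" for i unfolding F_def pi_lambda_def by (rule pi_fin[OF fA[OF that] fX])
  have Fval: "F i h = complex_of_real (\<Sum>g\<in>T. cmod (Dn i g) * cmod (\<xi> (-g+h)))" if "i \<in> I" for i h
  proof -
    have "F i h = (\<Sum>g\<in>T. A i g * (1 * X (-g+h)))"
      unfolding F_def pi_lambda_def by (rule pi_sum[OF fT]) (use that in \<open>auto simp: T_def A_def\<close>)
    then show ?thesis by (simp add: A_def X_def)
  qed
  have pt: "cmod (pi_tw \<sigma> \<tau> \<xi> h) \<le> cmod (\<Sum>i\<in>I. F i h)" for h
  proof -
    have "cmod (pi_tw \<sigma> \<tau> \<xi> h) = cmod (\<Sum>g\<in>T. \<tau> g * (\<sigma> g (-g+h) * \<xi> (-g+h)))"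
      by (subst pi_sum[OF fT]) (auto simp: T_def)
    also have "\<dots> \<le> (\<Sum>g\<in>T. cmod (\<tau> g) * cmod (\<xi> (-g+h)))"
      by (rule order_trans[OF norm_sum]) (use tw in \<open>simp add: norm_mult twist_def\<close>)
    also have "\<dots> \<le> (\<Sum>g\<in>T. (\<Sum>i\<in>I. cmod (Dn i g)) * cmod (\<xi> (-g+h)))"
      by (rule sum_mono, rule mult_right_mono[OF cover]) simp
    also have "\<dots> = (\<Sum>i\<in>I. \<Sum>g\<in>T. cmod (Dn i g) * cmod (\<xi> (-g+h)))"
      by (simp add: sum_distrib_right sum.swap[of _ T I])
    also have "\<dots> = cmod (\<Sum>i\<in>I. F i h)"
    proof -
      have e: "(\<Sum>i\<in>I. F i h) = complex_of_real (\<Sum>i\<in>I. \<Sum>g\<in>T. cmod (Dn i g) * cmod (\<xi> (-g+h)))"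
        unfolding of_real_sum using Fval by simp
      have nn: "(\<Sum>i\<in>I. \<Sum>g\<in>T. cmod (Dn i g) * cmod (\<xi> (-g+h))) \<ge> 0"
        by (simp add: sum_nonneg)
      show ?thesis by (simp only: e norm_of_real abs_of_nonneg[OF nn])
    qed
    finally show ?thesis .
  qed
  have "l2norm (pi_tw \<sigma> \<tau> \<xi>) \<le> l2norm (\<lambda>h. \<Sum>i\<in>I. F i h)"
    by (rule l2norm_mono[OF fin_supp_sum[OF fI fF] pt])
  also have "\<dots> \<le> (\<Sum>i\<in>I. l2norm (F i))" by (rule l2norm_sum[OF fI fF])
  also have "\<dots> \<le> (\<Sum>i\<in>I. haagerup_content (E i) * l2norm (A i) * l2norm X)"
  proof (rule sum_mono)
    fix i assume i: "i \<in> I"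
    show "l2norm (F i) \<le> haagerup_content (E i) * l2norm (A i) * l2norm X"
      unfolding F_def by (rule content_bound[OF fE[OF i] _ fX]) (use sE[OF i] in \<open>auto simp: A_def\<close>)
  qed
  also have "\<dots> = (\<Sum>i\<in>I. haagerup_content (E i) * l2norm (Dn i) * l2norm \<xi>)"
    unfolding A_def X_def l2norm_abs ..
  finally show ?thesis .
qed

lemma geom_eq:
  fixes q :: real
  assumes "R \<le> N"
  shows "(1 - q) * (\<Sum>n\<in>{R..<N}. q ^ n) = q ^ R - q ^ N"
  using assms
proof (induction N rule: dec_induct)
  case base
  then show ?case by simp
next
  case (step n)
  define S where "S = (\<Sum>n\<in>{R..<n}. q ^ n)"
  have "{R..<Suc n} = insert n {R..<n}" using step by auto
  then have "(\<Sum>n\<in>{R..<Suc n}. q ^ n) = q ^ n + S" by (simp add: S_def)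
  then have "(1 - q) * (\<Sum>n\<in>{R..<Suc n}. q ^ n) = (1 - q) * q ^ n + (1 - q) * S"
    by (simp add: distrib_left)
  also have "\<dots> = (1 - q) * q ^ n + (q ^ R - q ^ n)" using step(3) by (simp add: S_def)
  also have "\<dots> = q ^ R - q ^ Suc n" by (simp add: algebra_simps)
  finally show ?case .
qed

lemma geom_le:
  fixes q :: real
  assumes "0 \<le> q" "q < 1"
  shows "(\<Sum>n\<in>{R..<N}. q ^ n) \<le> q ^ R / (1 - q)"
proof (cases "R \<le> N")
  case True
  have "(1 - q) * (\<Sum>n\<in>{R..<N}. q ^ n) \<le> q ^ R" using geom_eq[OF True, of q] assms by simp
  then show ?thesis using assms by (simp add: field_simps)
next
  case False
  then show ?thesis using assms by simp
qed

lemma powr_exp_id: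
  fixes t :: real
  shows "exp (t/2) powr (real n + 1) * exp (- t * real n) = exp (t/2) * exp (- t/2) ^ n"
proof -
  have "exp (t/2) powr (real n + 1) = exp ((real n + 1) * (t/2))" by (simp add: powr_def)
  then have "exp (t/2) powr (real n + 1) * exp (- t * real n) = exp ((real n + 1) * (t/2)) * exp (- t * real n)"
    by simp
  also have "\<dots> = exp ((real n + 1) * (t/2) + (- t * real n))" by (rule exp_add[symmetric])
  also have "(real n + 1) * (t/2) + (- t * real n) = t/2 + real n * (- t/2)" by (simp add: field_simps)
  also have "exp \<dots> = exp (t/2) * exp (- t/2) ^ n" by (simp only: exp_add exp_of_nat_mult)
  finally show ?thesis .
qed

lemma key_bound:
  fixes L :: "'g::group_add \<Rightarrow> real" and R :: nat
  assumes tw: "twist \<sigma>"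
    and Lnn: "\<And>g. L g \<ge> 0"
    and fin: "\<And>r. r \<ge> 0 \<Longrightarrow> finite {g. L g \<le> r}"
    and t: "t > 0"
    and pd: "pos_def_fun (\<lambda>g. complex_of_real (exp (- t * L g)))"
    and r0: "\<And>r. r \<ge> r0 \<Longrightarrow> haagerup_content {g. L g \<le> r} < exp (t/2) powr r"
    and R: "real R \<ge> r0"
    and small: "exp (t/2) * exp (- t/2) ^ R / (1 - exp (- t/2)) \<le> \<delta>"
    and fc: "fin_supp c" and oc: "op_norm (pi_tw \<sigma> c) \<le> 1"
  shows "op_norm (pi_tw \<sigma> (\<lambda>g. (if L g \<le> real R then complex_of_real (exp (- t * L g)) else 0) * c g)) \<le> 1 + \<delta>"
proof -
  define \<phi> where "\<phi> = (\<lambda>g. complex_of_real (exp (- t * L g)))"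
  define \<psi> where "\<psi> = (\<lambda>g. if L g \<le> real R then \<phi> g else 0)"
  define q where "q = exp (- t/2)"
  have q0: "0 < q" "q < 1" using t by (auto simp: q_def)
  have d0: "\<delta> \<ge> 0"
  proof -
    have "0 \<le> exp (t/2) * q ^ R / (1 - q)" using q0 by simp
    then show ?thesis using small by (simp add: q_def)
  qed
  define Sc where "Sc = {g. c g \<noteq> 0}"
  have fSc: "finite Sc" using fc by (simp add: Sc_def fin_supp_def)
  define N where "N = nat \<lceil>\<Sum>g\<in>Sc. L g\<rceil>"
  have LN: "L g \<le> real N" if "g \<in> Sc" for g
  proof -
    have "L g \<le> (\<Sum>g\<in>Sc. L g)" by (rule member_le_sum[OF that]) (use Lnn fSc in auto)
    also have "\<dots> \<le> real N" unfolding N_def by linarith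
    finally show ?thesis .
  qed
  define \<tau> where "\<tau> = (\<lambda>g. (if L g \<le> real R then 0 else \<phi> g) * c g)"
  define Dn where "Dn = (\<lambda>(n::nat) g. (if real n < L g \<and> L g \<le> real n + 1 then \<phi> g else 0) * c g)"
  define E where "E = (\<lambda>n::nat. {g. L g \<le> real n + 1})"
  have ft: "fin_supp \<tau>" unfolding \<tau>_def by (rule fin_supp_mult[OF fc])
  have fpc: "fin_supp (\<lambda>g. \<phi> g * c g)" by (rule fin_supp_mult[OF fc])
  have fD: "fin_supp (Dn n)" for n unfolding Dn_def by (rule fin_supp_mult[OF fc])
  have decomp: "(\<lambda>g. \<psi> g * c g) = (\<lambda>g. \<phi> g * c g - \<tau> g)"
    by (auto simp: \<psi>_def \<tau>_def)
  have Bd: "Bnd \<sigma> (\<lambda>g. \<psi> g * c g) (1 + \<delta>)"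
    unfolding Bnd_def
  proof (intro allI impI)
    fix \<xi> :: "'g \<Rightarrow> complex" assume fx: "fin_supp \<xi>"
    have "pi_tw \<sigma> (\<lambda>g. \<psi> g * c g) \<xi> = (\<lambda>h. pi_tw \<sigma> (\<lambda>g. \<phi> g * c g) \<xi> h - pi_tw \<sigma> \<tau> \<xi> h)"
      unfolding decomp by (intro ext pi_diff_d[OF fpc ft])
    then have "l2norm (pi_tw \<sigma> (\<lambda>g. \<psi> g * c g) \<xi>) \<le> l2norm (pi_tw \<sigma> (\<lambda>g. \<phi> g * c g) \<xi>) + l2norm (pi_tw \<sigma> \<tau> \<xi>)"
      using l2norm_triangle_diff[OF pi_fin[OF fpc fx] pi_fin[OF ft fx]] by simp
    also have "l2norm (pi_tw \<sigma> (\<lambda>g. \<phi> g * c g) \<xi>) \<le> l2norm \<xi>"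
    proof -
      have "l2norm (pi_tw \<sigma> (\<lambda>g. \<phi> g * c g) \<xi>) \<le> Re (\<phi> 0) * op_norm (pi_tw \<sigma> c) * l2norm \<xi>"
        by (rule schur[OF tw pd[folded \<phi>_def] fc fx])
      also have "\<dots> \<le> 1 * 1 * l2norm \<xi>"
      proof (rule mult_right_mono[OF mult_mono])
        show "Re (\<phi> 0) \<le> 1" using Lnn[of 0] t by (simp add: \<phi>_def)
      qed (use oc opn_nonneg[OF tw fc] l2norm_nonneg in auto)
      finally show ?thesis by simp
    qed
    also have "l2norm (pi_tw \<sigma> \<tau> \<xi>) \<le> (\<Sum>n\<in>{R..<N}. haagerup_content (E n) * l2norm (Dn n) * l2norm \<xi>)"
    proof (rule tail_bound[OF tw ft fx _ fD])
      show "finite {R..<N}" by simp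
      show "finite (E n)" for n unfolding E_def by (rule fin) simp
      show "{g. Dn n g \<noteq> 0} \<subseteq> E n" for n by (auto simp: Dn_def E_def split: if_splits)
      show "cmod (\<tau> g) \<le> (\<Sum>n\<in>{R..<N}. cmod (Dn n g))" for g
      proof (cases "\<tau> g = 0")
        case True
        then show ?thesis by (simp add: sum_nonneg)
      next
        case False
        then have Lg: "L g > real R" and cg: "c g \<noteq> 0" by (auto simp: \<tau>_def split: if_splits)
        have gN: "L g \<le> real N" using LN cg by (simp add: Sc_def)
        define m where "m = nat \<lceil>L g\<rceil> - 1"
        have c1: "\<lceil>L g\<rceil> \<ge> 1" using Lg R by (simp add: le_ceiling_iff)
        have n1: "nat \<lceil>L g\<rceil> \<ge> 1" using c1 by linarith
        have m1: "real m + 1 = of_int \<lceil>L g\<rceil>"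
        proof -
          have "real m + 1 = real (nat \<lceil>L g\<rceil>)" unfolding m_def using n1 by (simp add: of_nat_diff)
          also have "\<dots> = of_int \<lceil>L g\<rceil>" using c1 by simp
          finally show ?thesis .
        qed
        have mlt: "real m < L g" using m1 ceiling_correct[of "L g"] by linarith
        have mle: "L g \<le> real m + 1" using m1 le_of_int_ceiling[of "L g"] by simp
        have Rm: "R \<le> m"
        proof -
          have "real R < of_int \<lceil>L g\<rceil>" using Lg le_of_int_ceiling[of "L g"] by linarith
          then have "real R < real m + 1" using m1 by simp
          then show ?thesis by linarith
        qed
        have mN: "m < N"
        proof -
          have "\<lceil>L g\<rceil> \<le> int N" using gN by (simp add: ceiling_le_iff)
          then have "real m + 1 \<le> real N" using m1 by (metis of_int_le_iff of_int_of_nat_eq)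
          then show ?thesis by linarith
        qed
        have "\<tau> g = Dn m g" using Lg mlt mle by (simp add: \<tau>_def Dn_def)
        then have "cmod (\<tau> g) = cmod (Dn m g)" by simp
        also have "\<dots> \<le> (\<Sum>n\<in>{R..<N}. cmod (Dn n g))"
          using Rm mN by (intro member_le_sum) auto
        finally show ?thesis .
      qed
    qed
    also have "(\<Sum>n\<in>{R..<N}. haagerup_content (E n) * l2norm (Dn n) * l2norm \<xi>)
        \<le> (\<Sum>n\<in>{R..<N}. exp (t/2) * q ^ n * l2norm \<xi>)"
    proof (rule sum_mono)
      fix n assume n: "n \<in> {R..<N}"
      have lc: "l2norm c \<le> 1" using l2_le_opn[OF tw fc] oc by simp
      have lD: "l2norm (Dn n) \<le> exp (- t * real n)"
      proof -
        have "l2norm (Dn n) \<le> l2norm (\<lambda>g. complex_of_real (exp (- t * real n)) * c g)"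
        proof (rule l2norm_mono[OF fin_supp_mult[OF fc]])
          fix g
          show "cmod (Dn n g) \<le> cmod (complex_of_real (exp (- t * real n)) * c g)"
          proof (cases "real n < L g \<and> L g \<le> real n + 1")
            case True
            then have "exp (- t * L g) \<le> exp (- t * real n)" using t by simp
            then show ?thesis using True by (simp add: Dn_def \<phi>_def norm_mult mult_right_mono)
          qed (auto simp: Dn_def)
        qed
        also have "\<dots> = exp (- t * real n) * l2norm c" using l2norm_scale[OF fc] by simp
        also have "\<dots> \<le> exp (- t * real n)" using lc by simp
        finally show ?thesis .
      qed
      have hc: "haagerup_content (E n) < exp (t/2) powr (real n + 1)"
        unfolding E_def by (rule r0) (use R n in auto)
      have "haagerup_content (E n) * l2norm (Dn n) \<le> exp (t/2) powr (real n + 1) * l2norm (Dn n)"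
        using hc l2norm_nonneg[of "Dn n"] by (simp add: mult_right_mono)
      also have "\<dots> \<le> exp (t/2) powr (real n + 1) * exp (- t * real n)"
        by (rule mult_left_mono[OF lD]) simp
      also have "\<dots> = exp (t/2) * q ^ n" unfolding q_def by (rule powr_exp_id)
      finally show "haagerup_content (E n) * l2norm (Dn n) * l2norm \<xi> \<le> exp (t/2) * q ^ n * l2norm \<xi>"
        by (rule mult_right_mono[OF _ l2norm_nonneg])
    qed
    also have "(\<Sum>n\<in>{R..<N}. exp (t/2) * q ^ n * l2norm \<xi>) = exp (t/2) * (\<Sum>n\<in>{R..<N}. q ^ n) * l2norm \<xi>"
      by (simp add: sum_distrib_left sum_distrib_right mult.assoc)
    also have "\<dots> \<le> \<delta> * l2norm \<xi>"
    proof (rule mult_right_mono[OF _ l2norm_nonneg])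
      have "exp (t/2) * (\<Sum>n\<in>{R..<N}. q ^ n) \<le> exp (t/2) * (q ^ R / (1 - q))"
        by (rule mult_left_mono[OF geom_le]) (use q0 in auto)
      also have "\<dots> \<le> \<delta>" using small by (simp add: q_def)
      finally show "exp (t/2) * (\<Sum>n\<in>{R..<N}. q ^ n) \<le> \<delta>" .
    qed
    finally show "l2norm (pi_tw \<sigma> (\<lambda>g. \<psi> g * c g) \<xi>) \<le> (1 + \<delta>) * l2norm \<xi>"
      by (simp add: algebra_simps)
  qed
  have "op_norm (pi_tw \<sigma> (\<lambda>g. \<psi> g * c g)) \<le> 1 + \<delta>"
    by (rule opn_le[OF fin_supp_mult[OF fc] _ Bd]) (use d0 in simp)
  then show ?thesis unfolding \<psi>_def \<phi>_def by simp
qed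

theorem corollary5p15:
  fixes L :: "'g::{group_add, countable} \<Rightarrow> real"
  assumes "haagerup_property TYPE('g)"
    and "haagerup_function L"
    and "subexp_H_growth L"
  shows "\<forall>\<sigma>::'g \<Rightarrow> 'g \<Rightarrow> complex. normalized_2cocycle \<sigma> \<longrightarrow> metric_fejer \<sigma>"
proof (intro allI impI)
  fix \<sigma> :: "'g \<Rightarrow> 'g \<Rightarrow> complex" assume ns: "normalized_2cocycle \<sigma>"
  have tw: "twist \<sigma>" using ns by (simp add: normalized_2cocycle_def twist_def)
  have ndf: "neg_def_fun L" using assms(2) by (simp add: haagerup_function_def)
  have fin: "\<And>r. r \<ge> 0 \<Longrightarrow> finite {g. L g \<le> r}" using assms(2) by (simp add: haagerup_function_def)
  have Lnn: "\<And>g. L g \<ge> 0" using ndf by (simp add: neg_def_fun_def)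
  have pdt: "\<And>t. t > 0 \<Longrightarrow> pos_def_fun (\<lambda>g. complex_of_real (exp (- t * L g)))"
    using ndf by (simp add: neg_def_fun_def)
  show "metric_fejer \<sigma>" unfolding metric_fejer_def
  proof (intro allI impI)
    fix F :: "'g set" and \<epsilon> :: real
    assume \<epsilon>: "\<epsilon> > 0" and fF: "finite F"
    define e where "e = min \<epsilon> 1"
    define \<delta> where "\<delta> = e / 4"
    have \<delta>: "0 < \<delta>" "\<delta> \<le> 1/4" "\<delta> \<le> \<epsilon>/4" using \<epsilon> by (auto simp: \<delta>_def e_def)
    define M0 where "M0 = Max (L ` insert 0 F)"
    have M0: "L g \<le> M0" if "g \<in> insert 0 F" for g
      unfolding M0_def by (rule Max_ge) (use fF that in auto)
    have M0nn: "M0 \<ge> 0" using M0[of 0] Lnn[of 0] by simp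
    define t where "t = \<delta> / (M0 + 1)"
    have t: "t > 0" using \<delta> M0nn by (simp add: t_def)
    have near: "exp (- t * L g) \<ge> 1 - \<delta>" if "g \<in> insert 0 F" for g
    proof -
      have "t * L g \<le> t * M0" using M0[OF that] t by simp
      also have "t * M0 \<le> \<delta>" unfolding t_def using \<delta> M0nn by (simp add: field_simps)
      finally have "1 - \<delta> \<le> 1 + (- t * L g)" by simp
      also have "\<dots> \<le> exp (- t * L g)" by (rule exp_ge_add_one_self)
      finally show ?thesis .
    qed
    have le1: "exp (- t * L g) \<le> 1" for g using t Lnn[of g] by simp
    have b1: "exp (t/2) > 1" using t by simp
    have "\<exists>r0. \<forall>r\<ge>r0. haagerup_content {g. L g \<le> r} < exp (t/2) powr r"
      using assms(3) b1 unfolding subexp_H_growth_def by simp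
    then obtain r0 where r0: "\<And>r. r \<ge> r0 \<Longrightarrow> haagerup_content {g. L g \<le> r} < exp (t/2) powr r"
      by blast
    define q where "q = exp (- t/2)"
    have q0: "0 < q" "q < 1" using t by (auto simp: q_def)
    define C where "C = exp (t/2) / (1 - q)"
    have C0: "C > 0" using q0 by (simp add: C_def)
    have "(\<lambda>n. q ^ n) \<longlonglongrightarrow> 0" by (rule LIMSEQ_power_zero) (use q0 in simp)
    then have "eventually (\<lambda>n. q ^ n < \<delta> / C) sequentially"
      by (rule order_tendstoD) (use \<delta> C0 in simp)
    then obtain N1 where N1: "\<And>n. n \<ge> N1 \<Longrightarrow> q ^ n < \<delta> / C" by (auto simp: eventually_sequentially)
    define R where "R = max N1 (max (nat \<lceil>r0\<rceil>) (nat \<lceil>M0\<rceil>))"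
    have R1: "real R \<ge> r0" unfolding R_def by linarith
    have R2: "real R \<ge> M0" unfolding R_def by linarith
    have R3: "q ^ R < \<delta> / C" by (rule N1) (simp add: R_def)
    have small: "exp (t/2) * exp (- t/2) ^ R / (1 - exp (- t/2)) \<le> \<delta>"
    proof -
      have "exp (t/2) * exp (- t/2) ^ R / (1 - exp (- t/2)) = C * q ^ R"
        by (simp add: C_def q_def)
      also have "\<dots> \<le> C * (\<delta> / C)" using mult_left_mono[OF less_imp_le[OF R3], of C] C0 by simp
      also have "\<dots> = \<delta>" using C0 by simp
      finally show ?thesis .
    qed
    define \<psi> where "\<psi> = (\<lambda>g. if L g \<le> real R then complex_of_real (exp (- t * L g)) else 0)"
    have f\<psi>: "fin_supp \<psi>" unfolding fin_supp_def
      by (rule finite_subset[OF _ fin[of "real R"]]) (auto simp: \<psi>_def split: if_splits)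
    have kb: "op_norm (pi_tw \<sigma> (\<lambda>g. \<psi> g * c g)) \<le> 1 + \<delta>"
      if "fin_supp c" "op_norm (pi_tw \<sigma> c) \<le> 1" for c
      unfolding \<psi>_def by (rule key_bound[OF tw Lnn fin t pdt[OF t] r0 R1 small that])
    define Y where "Y = {op_norm (pi_tw \<sigma> (\<lambda>g. \<psi> g * c g)) | c. fin_supp c \<and> op_norm (pi_tw \<sigma> c) \<le> 1}"
    have d0Y: "op_norm (pi_tw \<sigma> (\<lambda>g. \<psi> g * delta0 g)) \<in> Y"
      unfolding Y_def using fin_supp_delta0 opn_delta0[OF tw] by force
    have Yne: "Y \<noteq> {}" using d0Y by blast
    have Ybdd: "bdd_above Y" unfolding Y_def by (rule bdd_aboveI[of _ "1 + \<delta>"]) (use kb in blast)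
    define m where "m = multiplier_norm \<sigma> \<psi>"
    have mY: "m = Sup Y" by (simp add: m_def multiplier_norm_def Y_def)
    have mup: "m \<le> 1 + \<delta>" unfolding mY Y_def
      by (rule cSup_least) (use Yne kb in \<open>auto simp: Y_def\<close>)
    have mlow: "m \<ge> 1 - \<delta>"
    proof -
      have "(\<lambda>g. \<psi> g * delta0 g) = (\<lambda>g. \<psi> 0 * delta0 g)" by (auto simp: delta0_def)
      then have "op_norm (pi_tw \<sigma> (\<lambda>g. \<psi> g * delta0 g)) = cmod (\<psi> 0)"
        using opn_scale[OF tw fin_supp_delta0, of "\<psi> 0"] opn_delta0[OF tw] by simp
      also have "cmod (\<psi> 0) = exp (- t * L 0)" using M0[of 0] R2 by (simp add: \<psi>_def)
      finally have "exp (- t * L 0) \<le> m" unfolding mY using cSup_upper[OF d0Y Ybdd] by simp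
      then show ?thesis using near[of 0] by simp
    qed
    have mpos: "m > 0" using mlow \<delta> by simp
    let ?\<phi> = "\<lambda>g. complex_of_real (1 / m) * \<psi> g"
    show "\<exists>\<phi>. fin_supp \<phi> \<and> multiplier_norm \<sigma> \<phi> = 1 \<and> (\<forall>g\<in>F. cmod (\<phi> g - 1) < \<epsilon>)"
    proof (intro exI conjI)
      show "fin_supp ?\<phi>" by (rule fin_supp_mult[OF f\<psi>])
      have eqc: "op_norm (pi_tw \<sigma> (\<lambda>g. ?\<phi> g * c g)) = op_norm (pi_tw \<sigma> (\<lambda>g. \<psi> g * c g)) / m"
        if fc: "fin_supp c" for c
      proof -
        have "(\<lambda>g. ?\<phi> g * c g) = (\<lambda>g. complex_of_real (1 / m) * (\<psi> g * c g))" by (simp add: mult.assoc)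
        then show ?thesis
          using opn_scale[OF tw fin_supp_mult[OF fc], of "complex_of_real (1 / m)" \<psi>] mpos
          by (simp add: norm_divide)
      qed
      show "multiplier_norm \<sigma> ?\<phi> = 1"
        unfolding multiplier_norm_def
      proof (rule cSup_eq_non_empty)
        show "{op_norm (pi_tw \<sigma> (\<lambda>g. ?\<phi> g * c g)) |c. fin_supp c \<and> op_norm (pi_tw \<sigma> c) \<le> 1} \<noteq> {}"
          using fin_supp_delta0 opn_delta0[OF tw] by force
      next
        fix x assume "x \<in> {op_norm (pi_tw \<sigma> (\<lambda>g. ?\<phi> g * c g)) |c. fin_supp c \<and> op_norm (pi_tw \<sigma> c) \<le> 1}"
        then obtain c where c: "fin_supp c" "op_norm (pi_tw \<sigma> c) \<le> 1" "x = op_norm (pi_tw \<sigma> (\<lambda>g. ?\<phi> g * c g))"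
          by blast
        have "op_norm (pi_tw \<sigma> (\<lambda>g. \<psi> g * c g)) \<in> Y" unfolding Y_def using c by blast
        then have "op_norm (pi_tw \<sigma> (\<lambda>g. \<psi> g * c g)) \<le> m" unfolding mY by (rule cSup_upper[OF _ Ybdd])
        then show "x \<le> 1" using c(3) eqc[OF c(1)] mpos by simp
      next
        fix y assume H: "\<And>x. x \<in> {op_norm (pi_tw \<sigma> (\<lambda>g. ?\<phi> g * c g)) |c. fin_supp c \<and> op_norm (pi_tw \<sigma> c) \<le> 1} \<Longrightarrow> x \<le> y"
        have "m \<le> y * m" unfolding mY
        proof (rule cSup_least[OF Yne])
          fix z assume "z \<in> Y"
          then obtain c where c: "fin_supp c" "op_norm (pi_tw \<sigma> c) \<le> 1" "z = op_norm (pi_tw \<sigma> (\<lambda>g. \<psi> g * c g))"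
            unfolding Y_def by blast
          have "op_norm (pi_tw \<sigma> (\<lambda>g. ?\<phi> g * c g)) \<le> y" by (rule H) (use c in blast)
          then have "z / m \<le> y" using eqc[OF c(1)] c(3) by simp
          then show "z \<le> y * Sup Y" using mpos unfolding mY by (simp add: field_simps)
        qed
        then show "1 \<le> y" using mpos by simp
      qed
      show "\<forall>g\<in>F. cmod (?\<phi> g - 1) < \<epsilon>"
      proof
        fix g assume gF: "g \<in> F"
        define a where "a = exp (- t * L g)"
        have a1: "a \<ge> 1 - \<delta>" "a \<le> 1" using near[of g] le1[of g] gF by (auto simp: a_def)
        have "\<psi> g = complex_of_real a" using M0[of g] gF R2 by (simp add: \<psi>_def a_def)
        then have e: "?\<phi> g - 1 = complex_of_real ((a - m) / m)" using mpos by (simp add: field_simps)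
        have "cmod (?\<phi> g - 1) = \<bar>(a - m) / m\<bar>" by (simp only: e norm_of_real)
        also have "\<dots> = \<bar>a - m\<bar> / m" using mpos by simp
        also have "\<dots> \<le> (2 * \<delta>) / m"
          by (rule divide_right_mono) (use a1 mup mlow mpos in auto)
        also have "\<dots> \<le> (2 * \<delta>) / (3/4)"
          by (rule divide_left_mono) (use mlow \<delta> in auto)
        also have "\<dots> < \<epsilon>" using \<delta> \<epsilon> by simp
        finally show "cmod (?\<phi> g - 1) < \<epsilon>" .
      qed
    qed
  qed
qed

end
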